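(* Let $P$ be a rooted forest on $[n]$ whose labeling is natural, let $M$ be the transition matrix of the promotion graph of $P$ with edge weights given by indeterminates $x_1,\dots,x_n$, and let $\overline{M}=M+(x_1+\cdots+x_n)\mathbb{1}$. Then $$\det(\lambda\mathbb{1}-\overline{M})=\prod_{\substack{S\subseteq[n]\\ S \text{ upper set in } P}}(\lambda-x_S)^{d_S},$$ where $x_S=\sum_{i\in S}x_i$ and $d_S$ is the derangement number of $S$ in the lattice $L$ of upper sets of $P$. In other words, for each upper set $S$ of $P$ there is an eigenvalue $x_S$ of $\overline{M}$ with multiplicity $d_S$.
   Context: A rooted forest is a disjoint union of rooted trees, where a rooted tree is a connected finite poset in which each element is covered by at most one element. Natural labeling: $i\prec j$ implies $i<j$. $\mathcal{L}(P)=\{\pi\in S_n : i\prec j \Rightarrow \pi^{-1}_i<\pi^{-1}_j\}$, in one-line notation $\pi=\pi_1\cdots\pi_n$. $\pi\tau_i$ ($1\le i<n$) swaps $\pi_i,\pi_{i+1}$ if they are incomparable in $P$ and is $\pi$ otherwise; operators act on the right; $\partial_j=\tau_j\tau_{j+1}\cdots\tau_{n-1}$ for $1\le j\le n$. Promotion graph: vertices $\mathcal{L}(P)$, an edge $\pi\to\pi\partial_j$ of weight $x_{\pi_j}$ for each $\pi$ and $j\in[n]$. Transition matrix $M$: for $\pi'\ne\pi$, $M(\pi',\pi)$ is the sum of weights of edges $\pi\to\pi'$; $M(\pi,\pi)$ is minus the sum of weights of edges $\pi\to\pi'$ with $\pi'\ne\pi$. An upper set $S$ is a subset with $x\in S,\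 y\succeq x\Rightarrow y\in S$. $L$ is the set of upper sets of $P$ ordered by inclusion (minimum $\emptyset$, maximum $P$). For $S\in L$, $d_S=\sum_{T\in L,\,T\supseteq S}\mu(S,T)\,f([T,P])$, where $\mu$ is the Möbius function of $L$ and $f([T,P])$ is the number of maximal chains in the interval $[T,P]$ of $L$. *)

theory Defs
  imports "HOL-Combinatorics.Combinatorics"
begin

definition prec :: "(nat \<Rightarrow> nat \<Rightarrow> bool) \<Rightarrow> nat \<Rightarrow> nat \<Rightarrow> bool" where
  "prec le x y \<longleftrightarrow> le x y \<and> x \<noteq> y"

definition is_poset :: "nat \<Rightarrow> (nat \<Rightarrow> nat \<Rightarrow> bool) \<Rightarrow> bool" where
  "is_poset n le \<longleftrightarrow>
     (\<forall>x y. le x y \<longrightarrow> x \<in> {1..n} \<and> y \<in> {1..n}) \<and>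
     (\<forall>x\<in>{1..n}. le x x) \<and>
     (\<forall>x y. le x y \<and> le y x \<longrightarrow> x = y) \<and>
     (\<forall>x y z. le x y \<and> le y z \<longrightarrow> le x z)"

definition covers :: "(nat \<Rightarrow> nat \<Rightarrow> bool) \<Rightarrow> nat \<Rightarrow> nat \<Rightarrow> bool" where
  "covers le y x \<longleftrightarrow> prec le x y \<and> \<not> (\<exists>z. prec le x z \<and> prec le z y)"

definition rooted_forest :: "nat \<Rightarrow> (nat \<Rightarrow> nat \<Rightarrow> bool) \<Rightarrow> bool" where
  "rooted_forest n le \<longleftrightarrow> is_poset n le \<and>
     (\<forall>x\<in>{1..n}. \<forall>y1 y2. covers le y1 x \<and> covers le y2 x \<longrightarrow> y1 = y2)"

definition natural_labeling :: "(nat \<Rightarrow> nat \<Rightarrow> bool) \<Rightarrow> bool" where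
  "natural_labeling le \<longleftrightarrow> (\<forall>i j. prec le i j \<longrightarrow> i < j)"

text \<open>A permutation \<pi> of {1..n} in one-line notation: \<pi>_k = \<pi> k.\<close>
definition lin_ext :: "nat \<Rightarrow> (nat \<Rightarrow> nat \<Rightarrow> bool) \<Rightarrow> (nat \<Rightarrow> nat) set" where
  "lin_ext n le = {\<pi>. \<pi> permutes {1..n} \<and>
       (\<forall>i j. prec le i j \<longrightarrow> inv \<pi> i < inv \<pi> j)}"

definition tau :: "(nat \<Rightarrow> nat \<Rightarrow> bool) \<Rightarrow> nat \<Rightarrow> (nat \<Rightarrow> nat) \<Rightarrow> (nat \<Rightarrow> nat)" where
  "tau le i \<pi> = (if \<not> le (\<pi> i) (\<pi> (Suc i)) \<and> \<not> le (\<pi> (Suc i)) (\<pi> i)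
                 then \<pi> \<circ> transpose i (Suc i) else \<pi>)"

text \<open>\<pi>\<partial>_j = \<pi>\<tau>_j\<tau>_{j+1}...\<tau>_{n-1} (operators act on the right).\<close>
definition partial :: "nat \<Rightarrow> (nat \<Rightarrow> nat \<Rightarrow> bool) \<Rightarrow> nat \<Rightarrow> (nat \<Rightarrow> nat) \<Rightarrow> (nat \<Rightarrow> nat)" where
  "partial n le j \<pi> = fold (tau le) [j..<n] \<pi>"

text \<open>Transition matrix of the promotion graph: edges \<pi> \<rightarrow> \<pi>\<partial>_j of weight x_{\<pi>_j}, j \<in> [n].\<close>
definition trans_mat :: "nat \<Rightarrow> (nat \<Rightarrow> nat \<Rightarrow> bool) \<Rightarrow> (nat \<Rightarrow> 'a::comm_ring_1)
    \<Rightarrow> (nat \<Rightarrow> nat) \<Rightarrow> (nat \<Rightarrow> nat) \<Rightarrow> 'a" where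
  "trans_mat n le x \<pi>' \<pi> =
     (if \<pi>' \<noteq> \<pi> then (\<Sum>j\<in>{j\<in>{1..n}. partial n le j \<pi> = \<pi>'}. x (\<pi> j))
      else - (\<Sum>j\<in>{j\<in>{1..n}. partial n le j \<pi> \<noteq> \<pi>}. x (\<pi> j)))"

definition trans_mat_bar :: "nat \<Rightarrow> (nat \<Rightarrow> nat \<Rightarrow> bool) \<Rightarrow> (nat \<Rightarrow> 'a::comm_ring_1)
    \<Rightarrow> (nat \<Rightarrow> nat) \<Rightarrow> (nat \<Rightarrow> nat) \<Rightarrow> 'a" where
  "trans_mat_bar n le x \<pi>' \<pi> =
     trans_mat n le x \<pi>' \<pi> + (if \<pi>' = \<pi> then (\<Sum>i\<in>{1..n}. x i) else 0)"

definition det_on :: "'b set \<Rightarrow> ('b \<Rightarrow> 'b \<Rightarrow> 'a::comm_ring_1) \<Rightarrow> 'a" where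
  "det_on A F = (\<Sum>p\<in>{p. p permutes A}. of_int (sign p) * (\<Prod>i\<in>A. F i (p i)))"

definition upper_sets :: "nat \<Rightarrow> (nat \<Rightarrow> nat \<Rightarrow> bool) \<Rightarrow> nat set set" where
  "upper_sets n le = {S. S \<subseteq> {1..n} \<and> (\<forall>x\<in>S. \<forall>y. le x y \<longrightarrow> y \<in> S)}"

function mobius :: "'a set set \<Rightarrow> 'a set \<Rightarrow> 'a set \<Rightarrow> int" where
  "mobius L S T =
     (if S = T then 1
      else if S \<subset> T \<and> finite T
        then - (\<Sum>U\<in>{U\<in>L. S \<subseteq> U \<and> U \<subset> T}. mobius L S U)
      else 0)"
  by auto
termination
  by (relation "measure (\<lambda>(L,S,T). card T)") (auto intro: psubset_card_mono)

definition lat_interval :: "'a set set \<Rightarrow> 'a set \<Rightarrow> 'a set \<Rightarrow> 'a set set" where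
  "lat_interval L A B = {U\<in>L. A \<subseteq> U \<and> U \<subseteq> B}"

definition is_chain :: "'a set set \<Rightarrow> bool" where
  "is_chain C \<longleftrightarrow> (\<forall>X\<in>C. \<forall>Y\<in>C. X \<subseteq> Y \<or> Y \<subseteq> X)"

definition maximal_chains :: "'a set set \<Rightarrow> 'a set \<Rightarrow> 'a set \<Rightarrow> 'a set set set" where
  "maximal_chains L A B =
     {C. C \<subseteq> lat_interval L A B \<and> is_chain C \<and>
         (\<forall>C'. C \<subseteq> C' \<and> C' \<subseteq> lat_interval L A B \<and> is_chain C' \<longrightarrow> C' = C)}"

definition derangement_number :: "nat \<Rightarrow> (nat \<Rightarrow> nat \<Rightarrow> bool) \<Rightarrow> nat set \<Rightarrow> int" where
  "derangement_number n le S =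
     (let L = upper_sets n le in
      \<Sum>T\<in>{T\<in>L. S \<subseteq> T}. mobius L S T * int (card (maximal_chains L T {1..n})))"

end

theory Submission
  imports Defs "Jordan_Normal_Form.Determinant"
begin

lemma sign_conj_bij:
  fixes h :: "'b \<Rightarrow> 'c"
  assumes p: "p permutes X" and fin: "finite X" and h: "bij_betw h X Y"
  shows "sign (\<lambda>y. if y \<in> Y then h (p (inv_into X h y)) else y) = sign p"
  using p fin
proof (induction rule: permutes_induct)
  case id
  have "(\<lambda>y. if y \<in> Y then h (id (inv_into X h y)) else y) = id"
    using h by (auto simp: fun_eq_iff bij_betw_inv_into_right)
  then show ?case by simp
next
  case (swap a b p)
  have finY: "finite Y" using h fin by (simp add: bij_betw_finite)
  let ?c = "\<lambda>p. (\<lambda>y. if y \<in> Y then h (p (inv_into X h y)) else y)"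
  have cp: "?c p permutes Y"
    using permutes_bij_inv_into[OF swap.hyps(4) h] by simp
  have ha: "h a \<in> Y" "h b \<in> Y" using swap.hyps(1,2) h by (auto dest: bij_betwE)
  have hab: "h a \<noteq> h b" using swap.hyps(1,2,3) h by (auto simp: bij_betw_def dest: inj_onD)
  have eq: "?c (Transposition.transpose a b \<circ> p) = Transposition.transpose (h a) (h b) \<circ> ?c p"
  proof
    fix y show "?c (Transposition.transpose a b \<circ> p) y = (Transposition.transpose (h a) (h b) \<circ> ?c p) y"
    proof (cases "y \<in> Y")
      case True
      have iy: "inv_into X h y \<in> X" proof -
        have "y \<in> h ` X" using True h by (simp add: bij_betw_def)
        then show ?thesis by (rule inv_into_into)
      qed
      have piy: "p (inv_into X h y) \<in> X" using iy by (simp add: permutes_in_image[OF swap.hyps(4)])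
      have inj: "inj_on h X" using h by (simp add: bij_betw_def)
      have "h (Transposition.transpose a b (p (inv_into X h y))) = Transposition.transpose (h a) (h b) (h (p (inv_into X h y)))"
        using inj piy swap.hyps(1,2) by (auto simp: Transposition.transpose_def dest: inj_onD)
      then show ?thesis using True by simp
    next
      case False
      then have "y \<noteq> h a" "y \<noteq> h b" using ha by auto
      then show ?thesis using False by (simp add: Transposition.transpose_def)
    qed
  qed
  have "sign (?c (Transposition.transpose a b \<circ> p)) = sign (Transposition.transpose (h a) (h b)) * sign (?c p)"
    unfolding eq
    by (rule sign_compose) (auto intro: permutation_swap_id permutes_imp_permutation[OF finY cp])
  also have "\<dots> = - sign p" using hab swap.IH by (simp add: sign_swap_id)
  also have "\<dots> = sign (Transposition.transpose a b) * sign p" using swap.hyps(3) by (simp add: sign_swap_id)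
  also have "\<dots> = sign (Transposition.transpose a b \<circ> p)"
    by (rule sign_compose[symmetric]) (auto intro: permutation_swap_id permutes_imp_permutation[OF fin swap.hyps(4)])
  finally show ?case .
qed

lemma det_on_reindex:
  fixes h :: "'b \<Rightarrow> 'c" and F :: "'c \<Rightarrow> 'c \<Rightarrow> 'a::comm_ring_1"
  assumes h: "bij_betw h X Y" and fin: "finite X"
  shows "det_on Y F = det_on X (\<lambda>x x'. F (h x) (h x'))"
proof -
  let ?c = "\<lambda>p. (\<lambda>y. if y \<in> Y then h (p (inv_into X h y)) else y)"
  have bij: "bij_betw ?c {p. p permutes X} {p. p permutes Y}"
    using bij_betw_permutations[OF h] .
  have "det_on Y F = (\<Sum>p\<in>{p. p permutes X}. of_int (sign (?c p)) * (\<Prod>y\<in>Y. F y (?c p y)))"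
    unfolding det_on_def by (rule sum.reindex_bij_betw[OF bij, symmetric])
  also have "\<dots> = det_on X (\<lambda>x x'. F (h x) (h x'))"
    unfolding det_on_def
  proof (rule sum.cong[OF refl])
    fix p assume "p \<in> {p. p permutes X}"
    then have p: "p permutes X" by simp
    have "(\<Prod>y\<in>Y. F y (?c p y)) = (\<Prod>x\<in>X. F (h x) (?c p (h x)))"
      by (rule prod.reindex_bij_betw[OF h, symmetric])
    also have "\<dots> = (\<Prod>x\<in>X. F (h x) (h (p x)))"
    proof (rule prod.cong[OF refl])
      fix x assume x: "x \<in> X"
      have "h x \<in> Y" using x h bij_betwE by blast
      moreover have "inv_into X h (h x) = x" using x h by (simp add: bij_betw_inv_into_left)
      ultimately show "F (h x) (?c p (h x)) = F (h x) (h (p x))" by simp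
    qed
    finally show "of_int (sign (?c p)) * (\<Prod>y\<in>Y. F y (?c p y)) = of_int (sign p) * (\<Prod>x\<in>X. F (h x) (h (p x)))"
      using sign_conj_bij[OF p fin h] by simp
  qed
  finally show ?thesis .
qed

lemma det_on_mat:
  "det_on {0..<N} G = det (mat N N (\<lambda>(i,j). G i j))"
proof -
  have "det (mat N N (\<lambda>(i,j). G i j)) = (\<Sum> p \<in> {p. p permutes {0 ..< N}}.
     signof p * (\<Prod> i = 0 ..< N. mat N N (\<lambda>(i,j). G i j) $$ (i, p i)))"
    by (rule det_def') simp
  also have "\<dots> = det_on {0..<N} G" unfolding det_on_def
  proof (rule sum.cong[OF refl])
    fix p assume "p \<in> {p. p permutes {0..<N}}"
    then have p: "p permutes {0..<N}" by simp
    have "(\<Prod> i = 0 ..< N. mat N N (\<lambda>(i,j). G i j) $$ (i, p i)) = (\<Prod> i = 0 ..< N. G i (p i))"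
      by (rule prod.cong[OF refl]) (use p permutes_in_image in auto)
    then show "signof p * (\<Prod> i = 0 ..< N. mat N N (\<lambda>(i,j). G i j) $$ (i, p i)) = of_int (sign p) * (\<Prod>i\<in>{0..<N}. G i (p i))"
      by simp
  qed
  finally show ?thesis by simp
qed

lemma det_on_mult:
  fixes A B :: "'b \<Rightarrow> 'b \<Rightarrow> 'a::comm_ring_1"
  assumes fin: "finite X"
  shows "det_on X (\<lambda>x z. \<Sum>y\<in>X. A x y * B y z) = det_on X A * det_on X B"
proof -
  obtain e where e: "bij_betw e {0..<card X} X" using ex_bij_betw_nat_finite[OF fin] by blast
  let ?N = "card X"
  have fin_nat: "finite {0..<?N}" by simp
  let ?A = "mat ?N ?N (\<lambda>(i,j). A (e i) (e j))"
  let ?B = "mat ?N ?N (\<lambda>(i,j). B (e i) (e j))"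
  have "det_on X (\<lambda>x z. \<Sum>y\<in>X. A x y * B y z) = det_on {0..<?N} (\<lambda>i j. \<Sum>y\<in>X. A (e i) y * B y (e j))"
    by (rule det_on_reindex[OF e]) simp
  also have "\<dots> = det_on {0..<?N} (\<lambda>i j. \<Sum>k\<in>{0..<?N}. A (e i) (e k) * B (e k) (e j))"
  proof -
    have "\<And>i j. (\<Sum>y\<in>X. A (e i) y * B y (e j)) = (\<Sum>k\<in>{0..<?N}. A (e i) (e k) * B (e k) (e j))"
      by (rule sum.reindex_bij_betw[OF e, symmetric])
    then show ?thesis by simp
  qed
  also have "\<dots> = det (?A * ?B)"
    unfolding det_on_mat
    by (rule arg_cong[where f=det]) (auto simp: scalar_prod_def intro!: eq_matI sum.cong)
  also have "\<dots> = det ?A * det ?B" by (rule det_mult) auto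
  also have "\<dots> = det_on X A * det_on X B"
    using det_on_reindex[OF e fin_nat, of A] det_on_reindex[OF e fin_nat, of B] det_on_mat[of "card X"] by metis
  finally show ?thesis .
qed

lemma det_on_transpose:
  fixes F :: "'b \<Rightarrow> 'b \<Rightarrow> 'a::comm_ring_1"
  assumes fin: "finite X"
  shows "det_on X (\<lambda>x y. F y x) = det_on X F"
proof -
  obtain e where e: "bij_betw e {0..<card X} X" using ex_bij_betw_nat_finite[OF fin] by blast
  let ?N = "card X"
  have "det_on X (\<lambda>x y. F y x) = det_on {0..<?N} (\<lambda>i j. F (e j) (e i))"
    by (rule det_on_reindex[OF e]) simp
  also have "\<dots> = det (transpose_mat (mat ?N ?N (\<lambda>(i,j). F (e i) (e j))))"
    unfolding det_on_mat by (rule arg_cong[where f=det]) auto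
  also have "\<dots> = det (mat ?N ?N (\<lambda>(i,j). F (e i) (e j)))" by (rule det_transpose) auto
  also have "\<dots> = det_on X F" unfolding det_on_mat[symmetric] by (rule det_on_reindex[OF e, symmetric]) simp
  finally show ?thesis .
qed

lemma det_on_empty[simp]: "det_on {} F = 1"
  unfolding det_on_def by simp

lemma det_on_sing[simp]: "det_on {a} F = F a a"
  unfolding det_on_def by (simp add: permutes_sing)

lemma det_on_two_block:
  fixes F :: "'b \<Rightarrow> 'b \<Rightarrow> 'a::comm_ring_1"
  assumes fin: "finite X" and YX: "Y \<subseteq> X" and zero: "\<And>y z. y \<in> Y \<Longrightarrow> z \<in> X - Y \<Longrightarrow> F y z = 0"
  shows "det_on X F = det_on Y F * det_on (X - Y) F"
proof -
  define Z where "Z = X - Y"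
  have finY: "finite Y" using fin YX finite_subset by blast
  have finZ: "finite Z" using fin Z_def by simp
  have XYZ: "X = Y \<union> Z" "Y \<inter> Z = {}" using YX Z_def by auto
  let ?t = "\<lambda>A p. of_int (sign p) * (\<Prod>x\<in>A. F x (p x))"
  define G where "G = {p. p permutes X \<and> (\<forall>y\<in>Y. p y \<in> Y)}"
  have "det_on X F = (\<Sum>p\<in>G. ?t X p)"
    unfolding det_on_def
  proof (rule sum.mono_neutral_right)
    show "finite {p. p permutes X}" using fin by (rule finite_permutations)
    show "G \<subseteq> {p. p permutes X}" unfolding G_def by auto
    show "\<forall>p\<in>{p. p permutes X} - G. ?t X p = 0"
    proof
      fix p assume p: "p \<in> {p. p permutes X} - G"
      then obtain y where y: "y \<in> Y" "p y \<notin> Y" unfolding G_def by auto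
      have "p y \<in> X" using p y YX permutes_in_image by fastforce
      then have "F y (p y) = 0" using zero y by auto
      then have "(\<Prod>x\<in>X. F x (p x)) = 0" using fin y YX by (intro prod_zero) auto
      then show "?t X p = 0" by simp
    qed
  qed
  also have "\<dots> = (\<Sum>q\<in>{p. p permutes Y} \<times> {p. p permutes Z}. ?t X (fst q \<circ> snd q))"
  proof (rule sum.reindex_bij_betw[symmetric])
    let ?r = "\<lambda>p. ((\<lambda>x. if x \<in> Y then p x else x), (\<lambda>x. if x \<in> Z then p x else x))"
    show "bij_betw (\<lambda>q. fst q \<circ> snd q) ({p. p permutes Y} \<times> {p. p permutes Z}) G"
    proof (rule bij_betw_byWitness[where f' = ?r])
      show "\<forall>q\<in>{p. p permutes Y} \<times> {p. p permutes Z}. ?r (fst q \<circ> snd q) = q"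
      proof
        fix q assume q: "q \<in> {p. p permutes Y} \<times> {p. p permutes Z}"
        then have q1: "fst q permutes Y" and q2: "snd q permutes Z" by auto
        have a: "(\<lambda>x. if x \<in> Y then (fst q \<circ> snd q) x else x) = fst q"
        proof
          fix x show "(if x \<in> Y then (fst q \<circ> snd q) x else x) = fst q x"
          proof (cases "x \<in> Y")
            case True then have "x \<notin> Z" using XYZ by auto
            then show ?thesis using True permutes_not_in[OF q2] by simp
          next
            case False then show ?thesis using permutes_not_in[OF q1] by simp
          qed
        qed
        have b: "(\<lambda>x. if x \<in> Z then (fst q \<circ> snd q) x else x) = snd q"
        proof
          fix x show "(if x \<in> Z then (fst q \<circ> snd q) x else x) = snd q x"
          proof (cases "x \<in> Z")
            case True
            then have "snd q x \<in> Z" using permutes_in_image[OF q2] by simp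
            then have "snd q x \<notin> Y" using XYZ by auto
            then show ?thesis using True permutes_not_in[OF q1] by simp
          next
            case False then show ?thesis using permutes_not_in[OF q2] by simp
          qed
        qed
        show "?r (fst q \<circ> snd q) = q" using a b by (simp add: prod_eq_iff)
      qed
      show "\<forall>p\<in>G. fst (?r p) \<circ> snd (?r p) = p"
      proof
        fix p assume "p \<in> G"
        then have p: "p permutes X" and pY: "\<forall>y\<in>Y. p y \<in> Y" unfolding G_def by auto
        show "fst (?r p) \<circ> snd (?r p) = p"
        proof
          fix x show "(fst (?r p) \<circ> snd (?r p)) x = p x"
          proof (cases "x \<in> Z")
            case True
            have "p x \<notin> Y"
            proof
              assume "p x \<in> Y"
              have "p ` Y = Y" using endo_inj_surj[OF finY] pY permutes_inj[OF p]
                by (metis image_subsetI inj_on_subset subset_UNIV)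
              then obtain y where "y \<in> Y" "p y = p x" using \<open>p x \<in> Y\<close> by force
              then have "y = x" using permutes_inj[OF p] by (meson injD)
              then show False using True \<open>y \<in> Y\<close> XYZ by auto
            qed
            then show ?thesis using True by simp
          next
            case False
            then show ?thesis using XYZ permutes_not_in[OF p] by auto
          qed
        qed
      qed
      show "(\<lambda>q. fst q \<circ> snd q) ` ({p. p permutes Y} \<times> {p. p permutes Z}) \<subseteq> G"
      proof
        fix p assume "p \<in> (\<lambda>q. fst q \<circ> snd q) ` ({p. p permutes Y} \<times> {p. p permutes Z})"
        then obtain q1 q2 where q1: "q1 permutes Y" and q2: "q2 permutes Z" and pq: "p = q1 \<circ> q2" by auto
        have "q1 permutes X" "q2 permutes X" using q1 q2 XYZ permutes_subset by blast+
        then have "p permutes X" using pq permutes_compose by blast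
        moreover have "\<forall>y\<in>Y. p y \<in> Y"
        proof
          fix y assume "y \<in> Y"
          then have "y \<notin> Z" using XYZ by auto
          then show "p y \<in> Y" using pq permutes_not_in[OF q2] permutes_in_image[OF q1] \<open>y \<in> Y\<close> by simp
        qed
        ultimately show "p \<in> G" unfolding G_def by simp
      qed
      show "?r ` G \<subseteq> {p. p permutes Y} \<times> {p. p permutes Z}"
      proof
        fix q assume "q \<in> ?r ` G"
        then obtain p where "p \<in> G" and q: "q = ?r p" by auto
        then have p: "p permutes X" and pY: "\<forall>y\<in>Y. p y \<in> Y" unfolding G_def by auto
        have imY: "p ` Y = Y" using endo_inj_surj[OF finY] pY permutes_inj[OF p]
          by (metis image_subsetI inj_on_subset subset_UNIV)
        have pZ: "\<forall>z\<in>Z. p z \<in> Z"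
        proof
          fix z assume z: "z \<in> Z"
          have "p z \<in> X" using z XYZ permutes_in_image[OF p] by auto
          moreover have "p z \<notin> Y"
          proof
            assume "p z \<in> Y"
            then obtain y where "y \<in> Y" "p y = p z" using imY by force
            then have "y = z" using permutes_inj[OF p] by (meson injD)
            then show False using z \<open>y \<in> Y\<close> XYZ by auto
          qed
          ultimately show "p z \<in> Z" using XYZ by auto
        qed
        have imZ: "p ` Z = Z" using endo_inj_surj[OF finZ] pZ permutes_inj[OF p]
          by (metis image_subsetI inj_on_subset subset_UNIV)
        have "(\<lambda>x. if x \<in> Y then p x else x) permutes Y"
          unfolding permutes_altdef
        proof
          show "bij_betw (\<lambda>x. if x \<in> Y then p x else x) Y Y"
            unfolding bij_betw_def
          proof
            show "inj_on (\<lambda>x. if x \<in> Y then p x else x) Y"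
              using permutes_inj[OF p] by (auto simp: inj_on_def dest: injD)
            show "(\<lambda>x. if x \<in> Y then p x else x) ` Y = Y" using imY by (auto simp: image_def)
          qed
        qed auto
        moreover have "(\<lambda>x. if x \<in> Z then p x else x) permutes Z"
          unfolding permutes_altdef
        proof
          show "bij_betw (\<lambda>x. if x \<in> Z then p x else x) Z Z"
            unfolding bij_betw_def
          proof
            show "inj_on (\<lambda>x. if x \<in> Z then p x else x) Z"
              using permutes_inj[OF p] by (auto simp: inj_on_def dest: injD)
            show "(\<lambda>x. if x \<in> Z then p x else x) ` Z = Z" using imZ by (auto simp: image_def)
          qed
        qed auto
        ultimately show "q \<in> {p. p permutes Y} \<times> {p. p permutes Z}" using q by simp
      qed
    qed
  qed
  also have "\<dots> = (\<Sum>q\<in>{p. p permutes Y} \<times> {p. p permutes Z}. ?t Y (fst q) * ?t Z (snd q))"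
  proof (rule sum.cong[OF refl])
    fix q assume q: "q \<in> {p. p permutes Y} \<times> {p. p permutes Z}"
    then have q1: "fst q permutes Y" and q2: "snd q permutes Z" by auto
    have s: "sign (fst q \<circ> snd q) = sign (fst q) * sign (snd q)"
      by (rule sign_compose) (use q1 q2 finY finZ permutes_imp_permutation in auto)
    have "(\<Prod>x\<in>X. F x ((fst q \<circ> snd q) x)) = (\<Prod>x\<in>Y. F x ((fst q \<circ> snd q) x)) * (\<Prod>x\<in>Z. F x ((fst q \<circ> snd q) x))"
      using XYZ finY finZ by (simp add: prod.union_disjoint)
    also have "(\<Prod>x\<in>Y. F x ((fst q \<circ> snd q) x)) = (\<Prod>x\<in>Y. F x (fst q x))"
    proof (rule prod.cong[OF refl])
      fix x assume "x \<in> Y" then have "x \<notin> Z" using XYZ by auto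
      then show "F x ((fst q \<circ> snd q) x) = F x (fst q x)" using permutes_not_in[OF q2] by simp
    qed
    also have "(\<Prod>x\<in>Z. F x ((fst q \<circ> snd q) x)) = (\<Prod>x\<in>Z. F x (snd q x))"
    proof (rule prod.cong[OF refl])
      fix x assume "x \<in> Z" then have "snd q x \<in> Z" using permutes_in_image[OF q2] by simp
      then have "snd q x \<notin> Y" using XYZ by auto
      then show "F x ((fst q \<circ> snd q) x) = F x (snd q x)" using permutes_not_in[OF q1] by simp
    qed
    finally show "?t X (fst q \<circ> snd q) = ?t Y (fst q) * ?t Z (snd q)" using s by (simp add: algebra_simps)
  qed
  also have "\<dots> = det_on Y F * det_on Z F"
    unfolding det_on_def sum_product sum.cartesian_product by (simp add: case_prod_beta)
  finally show ?thesis unfolding Z_def .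
qed

lemma det_on_blocks:
  fixes F :: "'b \<Rightarrow> 'b \<Rightarrow> 'a::comm_ring_1" and \<kappa> :: "'b \<Rightarrow> 'k" and ord :: "'k \<Rightarrow> nat"
  assumes "finite X"
    and "\<And>x y. x \<in> X \<Longrightarrow> y \<in> X \<Longrightarrow> \<kappa> x \<noteq> \<kappa> y \<Longrightarrow> ord (\<kappa> y) \<le> ord (\<kappa> x) \<Longrightarrow> F x y = 0"
  shows "det_on X F = (\<Prod>c\<in>\<kappa> ` X. det_on {x\<in>X. \<kappa> x = c} F)"
  using assms
proof (induction "card (\<kappa> ` X)" arbitrary: X rule: less_induct)
  case less
  show ?case
  proof (cases "X = {}")
    case True then show ?thesis by simp
  next
    case False
    let ?K = "\<kappa> ` X"
    have finK: "finite ?K" using less.prems(1) by simp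
    obtain c where c: "c \<in> ?K" "\<And>c'. c' \<in> ?K \<Longrightarrow> ord c' \<le> ord c"
    proof -
      have "ord ` ?K \<noteq> {}" using False by simp
      then have "Max (ord ` ?K) \<in> ord ` ?K" using finK by simp
      then obtain c where "c \<in> ?K" "ord c = Max (ord ` ?K)" by (metis (no_types, lifting) imageE)
      moreover have "\<And>c'. c' \<in> ?K \<Longrightarrow> ord c' \<le> Max (ord ` ?K)" using finK by simp
      ultimately show ?thesis using that by metis
    qed
    define Y where "Y = {x\<in>X. \<kappa> x = c}"
    have two: "det_on X F = det_on Y F * det_on (X - Y) F"
    proof (rule det_on_two_block[OF less.prems(1)])
      show "Y \<subseteq> X" unfolding Y_def by auto
      fix y z assume y: "y \<in> Y" and z: "z \<in> X - Y"
      then have "\<kappa> y \<noteq> \<kappa> z" "ord (\<kappa> z) \<le> ord (\<kappa> y)" using c unfolding Y_def by auto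
      then show "F y z = 0" using less.prems(2) y z unfolding Y_def by auto
    qed
    have K': "\<kappa> ` (X - Y) = ?K - {c}" unfolding Y_def by auto
    have "card (\<kappa> ` (X - Y)) < card ?K" unfolding K' using c(1) finK by (meson card_Diff1_less)
    then have IH: "det_on (X - Y) F = (\<Prod>c'\<in>\<kappa> ` (X - Y). det_on {x\<in>X - Y. \<kappa> x = c'} F)"
      using less.hyps[of "X - Y"] less.prems by auto
    have "(\<Prod>c'\<in>\<kappa> ` (X - Y). det_on {x\<in>X - Y. \<kappa> x = c'} F) = (\<Prod>c'\<in>?K - {c}. det_on {x\<in>X. \<kappa> x = c'} F)"
      unfolding K' by (rule prod.cong[OF refl]) (rule arg_cong[where f="\<lambda>A. det_on A F"], auto simp: Y_def)
    then show ?thesis using two IH c(1) finK Y_def by (simp add: prod.remove)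
  qed
qed

fun bub :: "(nat \<Rightarrow> nat \<Rightarrow> bool) \<Rightarrow> nat list \<Rightarrow> nat list" where
  "bub R (a # b # r) = (if R a b \<or> R b a then a # bub R (b # r) else b # bub R (a # r))"
| "bub R r = r"

fun Tp :: "(nat \<Rightarrow> nat \<Rightarrow> bool) \<Rightarrow> nat \<Rightarrow> nat list \<Rightarrow> nat list" where
  "Tp R i [] = []"
| "Tp R i (a # w) = (if a = i then bub R (a # w) else a # Tp R i w)"

definition lext :: "(nat \<Rightarrow> nat \<Rightarrow> bool) \<Rightarrow> nat list \<Rightarrow> bool" where
  "lext R w \<longleftrightarrow> distinct w \<and> sorted_wrt (\<lambda>a b. \<not> prec R b a) w"

lemma bub_mset: "mset (bub R w) = mset w"
  by (induction R w rule: bub.induct) auto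

lemma bub_length[simp]: "length (bub R w) = length w"
  using bub_mset size_mset by metis

lemma bub_set[simp]: "set (bub R w) = set w"
  using bub_mset set_mset_mset by metis

lemma Tp_mset: "mset (Tp R i w) = mset w"
  by (induction w) (auto simp: bub_mset)

lemma Tp_length[simp]: "length (Tp R i w) = length w"
  using Tp_mset size_mset by metis

lemma Tp_set[simp]: "set (Tp R i w) = set w"
  using Tp_mset set_mset_mset by metis

lemma bub_lext: "lext R w \<Longrightarrow> lext R (bub R w)"
proof (induction R w rule: bub.induct)
  case (1 R a b r)
  show ?case
  proof (cases "R a b \<or> R b a")
    case True
    have "lext R (b # r)" using 1(3) by (simp add: lext_def)
    then have "lext R (bub R (b # r))" using 1(1) True by simp
    then show ?thesis using True 1(3) by (simp add: lext_def)
  next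
    case False
    have "lext R (a # r)" using 1(3) by (simp add: lext_def)
    then have "lext R (bub R (a # r))" using 1(2) False by simp
    moreover have "\<not> prec R a b" using False by (simp add: prec_def)
    ultimately show ?thesis using False 1(3) by (auto simp: lext_def)
  qed
qed simp_all

lemma lext_append: "lext R (u @ v) \<longleftrightarrow> lext R u \<and> lext R v \<and> set u \<inter> set v = {} \<and> (\<forall>x\<in>set u. \<forall>y\<in>set v. \<not> prec R y x)"
  by (auto simp: lext_def sorted_wrt_append)

lemma Tp_lext: "lext R w \<Longrightarrow> lext R (Tp R i w)"
proof (induction w)
  case (Cons a w)
  then show ?case using bub_lext[of R "a # w"] by (auto simp: lext_def)
qed simp

lemma Tp_notin: "i \<notin> set u \<Longrightarrow> Tp R i (u @ v) = u @ Tp R i v"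
  by (induction u) auto

lemma Tp_notin': "i \<notin> set u \<Longrightarrow> Tp R i u = u"
  using Tp_notin[of i u R "[]"] by simp

lemma Tp_split: "i \<notin> set u \<Longrightarrow> Tp R i (u @ i # v) = u @ bub R (i # v)"
  by (induction u) auto

fun ip :: "nat list \<Rightarrow> nat" where
  "ip [] = 0"
| "ip [a] = 1"
| "ip (a # b # r) = (if a < b then Suc (ip (b # r)) else 1)"

lemma ip_le: "ip w \<le> length w"
  by (induction w rule: ip.induct) auto

lemma ip_pos: "w \<noteq> [] \<Longrightarrow> ip w \<ge> 1"
  by (induction w rule: ip.induct) auto

lemma ip_sorted: "sorted_wrt (<) (take (ip w) w)"
proof (induction w rule: ip.induct)
  case (3 a b r)
  show ?case
  proof (cases "a < b")
    case True
    have "ip (b # r) \<ge> 1" by (rule ip_pos) simp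
    then obtain k where k: "ip (b # r) = Suc k" by (cases "ip (b # r)") auto
    have s: "sorted_wrt (<) (b # take k r)" using 3 True k by simp
    then have "\<forall>x\<in>set (take k r). a < x" using True by auto
    then show ?thesis using True k s by simp
  next
    case False then show ?thesis by simp
  qed
qed auto

lemma ip_max: "k \<le> length w \<Longrightarrow> sorted_wrt (<) (take k w) \<Longrightarrow> k \<le> ip w"
proof (induction w arbitrary: k rule: ip.induct)
  case (3 a b r)
  show ?case
  proof (cases k)
    case 0 then show ?thesis by simp
  next
    case (Suc k1)
    show ?thesis
    proof (cases k1)
      case 0 then show ?thesis using Suc by simp
    next
      case (Suc k2)
      have "take k (a # b # r) = a # b # take k2 r" using \<open>k = Suc k1\<close> Suc by simp
      then have ab: "a < b" and st: "sorted_wrt (<) (take k1 (b # r))" using 3(3) Suc by auto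
      have "k1 \<le> ip (b # r)" using 3(1)[OF ab] st 3(2) \<open>k = Suc k1\<close> by simp
      then show ?thesis using ab \<open>k = Suc k1\<close> by simp
    qed
  qed
qed auto

lemma ip_not_sorted:
  assumes "ip w < length w" shows "\<not> sorted_wrt (<) (take (Suc (ip w)) w)"
  using ip_max[of "Suc (ip w)" w] assms by auto

locale forest =
  fixes n :: nat and R :: "nat \<Rightarrow> nat \<Rightarrow> bool"
  assumes rf: "rooted_forest n R" and nl: "natural_labeling R"
begin

lemma R_dom: "R x y \<Longrightarrow> x \<in> {1..n} \<and> y \<in> {1..n}"
  using rf unfolding rooted_forest_def is_poset_def by blast

lemma R_refl: "x \<in> {1..n} \<Longrightarrow> R x x"
  using rf unfolding rooted_forest_def is_poset_def by blast

lemma R_antisym: "R x y \<Longrightarrow> R y x \<Longrightarrow> x = y"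
  using rf unfolding rooted_forest_def is_poset_def by blast

lemma R_trans: "R x y \<Longrightarrow> R y z \<Longrightarrow> R x z"
  using rf unfolding rooted_forest_def is_poset_def by blast

lemma prec_less: "prec R x y \<Longrightarrow> x < y"
  using nl unfolding natural_labeling_def by blast

lemma R_le: "R x y \<Longrightarrow> x \<le> y"
  using prec_less[of x y] unfolding prec_def by force

lemma covers_unique: "x \<in> {1..n} \<Longrightarrow> covers R y1 x \<Longrightarrow> covers R y2 x \<Longrightarrow> y1 = y2"
  using rf unfolding rooted_forest_def by blast

lemma chain: "R x y \<Longrightarrow> R x z \<Longrightarrow> R y z \<or> R z y"
proof (induction "n - x" arbitrary: x rule: less_induct)
  case less
  show ?case
  proof (cases "y = x \<or> z = x")
    case True then show ?thesis using less.prems by auto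
  next
    case False
    then have pxy: "prec R x y" and pxz: "prec R x z" using less.prems by (auto simp: prec_def)
    have cov: "\<exists>c. covers R c x \<and> R c v" if pv: "prec R x v" for v
    proof -
      define A where "A = {u. prec R x u \<and> R u v}"
      have "A \<subseteq> {1..n}" unfolding A_def prec_def using R_dom by blast
      then have finA: "finite A" by (rule finite_subset) simp
      have "v \<in> A" using pv R_dom R_refl unfolding A_def prec_def by blast
      then have ne: "A \<noteq> {}" by auto
      define c where "c = Min A"
      have cA: "c \<in> A" using finA ne c_def by simp
      have "covers R c x" unfolding covers_def
      proof
        show "prec R x c" using cA A_def by simp
        show "\<not> (\<exists>z. prec R x z \<and> prec R z c)"
        proof
          assume "\<exists>z. prec R x z \<and> prec R z c"
          then obtain u where u: "prec R x u" "prec R u c" by auto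
          have "R u v" using u(2) cA R_trans unfolding A_def prec_def by blast
          then have "u \<in> A" using u(1) A_def by simp
          then have "c \<le> u" using finA c_def by simp
          moreover have "u < c" using prec_less u(2) by simp
          ultimately show False by simp
        qed
      qed
      then show ?thesis using cA A_def by auto
    qed
    obtain c1 where c1: "covers R c1 x" "R c1 y" using cov[OF pxy] by auto
    obtain c2 where c2: "covers R c2 x" "R c2 z" using cov[OF pxz] by auto
    have xn: "x \<in> {1..n}" using R_dom less.prems(1) by blast
    have "c1 = c2" using covers_unique[OF xn c1(1) c2(1)] .
    moreover have "n - c1 < n - x"
    proof -
      have "x < c1" using c1(1) prec_less unfolding covers_def by blast
      moreover have "c1 \<le> n" using R_dom c1(2) by auto
      ultimately show ?thesis by simp
    qed
    ultimately show ?thesis using less.hyps c1(2) c2(2) by metis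
  qed
qed

abbreviation "U \<equiv> upper_sets n R"

lemma U_sub: "S \<in> U \<Longrightarrow> S \<subseteq> {1..n}"
  unfolding upper_sets_def by auto

lemma U_fin: "S \<in> U \<Longrightarrow> finite S"
  using U_sub finite_subset by blast

lemma U_closed: "S \<in> U \<Longrightarrow> x \<in> S \<Longrightarrow> R x y \<Longrightarrow> y \<in> S"
  unfolding upper_sets_def by auto

lemma U_top: "{1..n} \<in> U"
  unfolding upper_sets_def using R_dom by auto

lemma U_empty: "{} \<in> U"
  unfolding upper_sets_def by auto

definition W :: "nat set \<Rightarrow> nat list set" where
  "W S = {w. lext R w \<and> set w = S}"

lemma W_fin: "finite S \<Longrightarrow> finite (W S)"
proof -
  assume "finite S"
  have "W S \<subseteq> permutations_of_set S" unfolding W_def permutations_of_set_def lext_def by auto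
  then show ?thesis by (rule finite_subset) simp
qed

lemma sorted_lext: "sorted_wrt (<) w \<Longrightarrow> lext R w"
proof -
  assume a: "sorted_wrt (<) w"
  then have "distinct w" by (simp add: strict_sorted_iff)
  moreover have "sorted_wrt (\<lambda>a b. \<not> prec R b a) w"
    using a by (rule sorted_wrt_mono_rel[rotated]) (use prec_less in force)
  ultimately show ?thesis unfolding lext_def by simp
qed

lemma suffix_U:
  assumes "S \<in> U" "lext R (u @ v)" "set (u @ v) = S"
  shows "set v \<in> U"
  unfolding upper_sets_def
proof (intro CollectI conjI ballI allI impI)
  show "set v \<subseteq> {1..n}" using assms U_sub by auto
  fix x y assume x: "x \<in> set v" and xy: "R x y"
  have yS: "y \<in> S" using U_closed[OF assms(1)] x xy assms(3) by auto
  show "y \<in> set v"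
  proof (rule ccontr)
    assume "y \<notin> set v"
    then have "y \<in> set u" using yS assms(3) by auto
    then have "\<not> prec R x y" using assms(2) x by (auto simp: lext_append)
    moreover have "x \<noteq> y" using \<open>y \<notin> set v\<close> x by auto
    ultimately show False using xy by (simp add: prec_def)
  qed
qed


definition mtop :: "nat \<Rightarrow> nat set \<Rightarrow> nat" where
  "mtop c S' = Max ({z. R c z} - S')"

lemma anc_fin: "finite {z. R c z}"
proof -
  have "{z. R c z} \<subseteq> {1..n}" using R_dom by blast
  then show ?thesis by (rule finite_subset) simp
qed

lemma bub_lemma:
  assumes "S' \<in> U" "lext R (c # rr @ t)" "set t = S'" "c \<notin> S'" "set rr \<inter> S' = {}" "c \<in> {1..n}"
    "\<forall>y. prec R c y \<and> y \<notin> S' \<longrightarrow> y \<in> set rr"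
  shows "\<exists>r'. bub R (c # rr @ t) = r' @ bub R (mtop c S' # t) \<and> length r' = length rr"
  using assms(2-7)
proof (induction rr arbitrary: c)
  case Nil
  have "{z. R c z} - S' = {c}"
  proof
    show "{z. R c z} - S' \<subseteq> {c}"
    proof
      fix z assume z: "z \<in> {z. R c z} - S'"
      show "z \<in> {c}"
      proof (rule ccontr)
        assume "z \<notin> {c}"
        then have "prec R c z" using z by (auto simp: prec_def)
        then show False using Nil.prems(6) z by auto
      qed
    qed
    show "{c} \<subseteq> {z. R c z} - S'" using R_refl Nil.prems(3,5) by auto
  qed
  then have "mtop c S' = c" unfolding mtop_def by simp
  then show ?case by simp
next
  case (Cons b rr)
  have lx: "lext R (c # b # rr @ t)" using Cons.prems(1) by simp
  have ncb: "\<not> prec R b c" and cb: "c \<noteq> b" using lx by (auto simp: lext_def)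
  have bS: "b \<notin> S'" using Cons.prems(4) by auto
  show ?case
  proof (cases "R c b \<or> R b c")
    case True
    have Rcb: "R c b" using True ncb cb by (auto simp: prec_def)
    have bn: "b \<in> {1..n}" using R_dom Rcb by blast
    have lb: "lext R (b # rr @ t)" using lx by (simp add: lext_def)
    have anc: "\<forall>y. prec R b y \<and> y \<notin> S' \<longrightarrow> y \<in> set rr"
    proof (intro allI impI)
      fix y assume y: "prec R b y \<and> y \<notin> S'"
      have "R c y" using Rcb y R_trans unfolding prec_def by blast
      moreover have "y \<noteq> c" using y Rcb R_antisym cb unfolding prec_def by blast
      ultimately have "prec R c y" by (simp add: prec_def)
      then have "y \<in> set (b # rr)" using Cons.prems(6) y by blast
      then show "y \<in> set rr" using y by (auto simp: prec_def)
    qed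
    obtain r'' where r'': "bub R (b # rr @ t) = r'' @ bub R (mtop b S' # t)" "length r'' = length rr"
      using Cons.IH[OF lb Cons.prems(2) bS _ bn anc] Cons.prems(4) by auto
    have "mtop b S' = mtop c S'"
    proof -
      let ?A = "{z. R c z} - S'" and ?B = "{z. R b z} - S'"
      have finA: "finite ?A" using anc_fin by simp
      have BA: "?B \<subseteq> ?A" using Rcb R_trans by blast
      have bB: "b \<in> ?B" using R_refl bn bS by simp
      then have neA: "?A \<noteq> {}" using BA by auto
      define M where "M = Max ?A"
      have MA: "M \<in> ?A" unfolding M_def by (rule Max_in[OF finA neA])
      have bM: "b \<le> M" using bB BA finA M_def by auto
      have "R b M"
      proof -
        have "R M b \<or> R b M" using chain[of c M b] MA Rcb by simp
        moreover have "R M b \<Longrightarrow> M = b" using R_le bM by force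
        ultimately show ?thesis using R_refl bn by auto
      qed
      then have MB: "M \<in> ?B" using MA by simp
      have "Max ?B = M"
      proof (rule antisym)
        show "Max ?B \<le> M" unfolding M_def by (rule Max_mono[OF BA]) (use bB finA in auto)
        show "M \<le> Max ?B" using MB finA BA finite_subset by (meson Max_ge)
      qed
      then show ?thesis unfolding mtop_def M_def by simp
    qed
    then show ?thesis using True r'' by auto
  next
    case False
    have lc: "lext R (c # rr @ t)" using lx by (simp add: lext_def)
    have anc: "\<forall>y. prec R c y \<and> y \<notin> S' \<longrightarrow> y \<in> set rr"
    proof (intro allI impI)
      fix y assume y: "prec R c y \<and> y \<notin> S'"
      then have "y \<in> set (b # rr)" using Cons.prems(6) by blast
      moreover have "y \<noteq> b" using y False by (auto simp: prec_def)
      ultimately show "y \<in> set rr" by simp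
    qed
    obtain r'' where r'': "bub R (c # rr @ t) = r'' @ bub R (mtop c S' # t)" "length r'' = length rr"
      using Cons.IH[OF lc Cons.prems(2,3) _ Cons.prems(5) anc] Cons.prems(4) by auto
    then show ?thesis using False by (rule_tac x="b # r''" in exI) auto
  qed
qed

lemma Tp_suffix_out:
  assumes S: "S \<in> U" and w: "w \<in> W S" and i: "i \<in> set w" and wut: "w = u @ t" and it: "i \<notin> set t"
  shows "\<exists>r'. Tp R i w = r' @ bub R (mtop i (set t) # t) \<and> Suc (length r') = length u"
proof -
  have iu: "i \<in> set u" using i it wut by auto
  obtain u1 u2 where u12: "u = u1 @ i # u2" "i \<notin> set u1" using split_list_first[OF iu] by auto
  have lw: "lext R w" and sw: "set w = S" using w by (auto simp: W_def)
  have Tpw: "Tp R i w = u1 @ bub R (i # u2 @ t)" using Tp_split[OF u12(2)] wut u12(1) by simp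
  have tU: "set t \<in> U" using suffix_U[OF S, of u t] lw sw wut by simp
  have l2: "lext R (i # u2 @ t)" using lw wut u12(1) lext_append[of R u1 "i # u2 @ t"] by simp
  have dis: "set u2 \<inter> set t = {}" using lw wut u12(1) by (auto simp: lext_def)
  have iN: "i \<in> {1..n}" using i sw U_sub[OF S] by blast
  have anc: "\<forall>y. prec R i y \<and> y \<notin> set t \<longrightarrow> y \<in> set u2"
  proof (intro allI impI)
    fix y assume y: "prec R i y \<and> y \<notin> set t"
    have "y \<in> S" using U_closed[OF S] i sw y by (auto simp: prec_def)
    then have "y \<in> set u1 \<or> y = i \<or> y \<in> set u2" using sw wut u12(1) y by auto
    moreover have "y \<noteq> i" using y by (simp add: prec_def)
    moreover have "y \<notin> set u1"
      using lw wut u12(1) lext_append[of R u1 "i # u2 @ t"] y by auto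
    ultimately show "y \<in> set u2" by blast
  qed
  obtain r'' where r'': "bub R (i # u2 @ t) = r'' @ bub R (mtop i (set t) # t)" "length r'' = length u2"
    using bub_lemma[OF tU l2 refl it dis iN anc] by auto
  show ?thesis using Tpw r'' u12(1) by (rule_tac x="u1 @ r''" in exI) simp
qed

lemma Tp_suffix_in:
  assumes "i \<in> set t" "set u \<inter> set t = {}"
  shows "Tp R i (u @ t) = u @ Tp R i t"
  using assms Tp_notin by blast


definition cw :: "nat set \<Rightarrow> nat list \<Rightarrow> nat list" where
  "cw S s = sorted_list_of_set (S - set s) @ s"

definition valid :: "nat set \<Rightarrow> nat list \<Rightarrow> bool" where
  "valid S s \<longleftrightarrow> lext R s \<and> set s \<in> U \<and> set s \<subseteq> S"

definition NR :: "nat set \<Rightarrow> nat list \<Rightarrow> bool" where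
  "NR S s \<longleftrightarrow> s \<noteq> [] \<and> (\<exists>b \<in> S - set s. hd s < b)"

lemma W_length: "S \<in> U \<Longrightarrow> v \<in> W S \<Longrightarrow> length v = card S"
  unfolding W_def lext_def using distinct_card by fastforce

lemma valid_drop: "S \<in> U \<Longrightarrow> v \<in> W S \<Longrightarrow> valid S (drop k v)"
proof -
  assume S: "S \<in> U" and v: "v \<in> W S"
  have lv: "lext R (take k v @ drop k v)" "set (take k v @ drop k v) = S" using v by (auto simp: W_def)
  show ?thesis unfolding valid_def
    using suffix_U[OF S lv] lv lext_append[of R "take k v" "drop k v"] by (auto dest: in_set_dropD)
qed

lemma cw_W: assumes S: "S \<in> U" and vs: "valid S s" shows "cw S s \<in> W S"
proof -
  have finS: "finite S" using U_fin[OF S] .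
  let ?p = "sorted_list_of_set (S - set s)"
  have sp: "sorted_wrt (<) ?p" by simp
  have setp: "set ?p = S - set s" using finS by simp
  have "lext R ?p" using sorted_lext[OF sp] .
  moreover have "lext R s" using vs valid_def by simp
  moreover have "\<forall>x\<in>set ?p. \<forall>y\<in>set s. \<not> prec R y x"
  proof (intro ballI notI)
    fix x y assume x: "x \<in> set ?p" and y: "y \<in> set s" and p: "prec R y x"
    have "x \<in> set s" using U_closed[of "set s" y x] vs y p by (auto simp: valid_def prec_def)
    then show False using x setp by simp
  qed
  ultimately have "lext R (cw S s)" unfolding cw_def using setp by (subst lext_append) auto
  moreover have "set (cw S s) = S" unfolding cw_def using setp vs valid_def by auto
  ultimately show ?thesis unfolding W_def by simp
qed

lemma cw_len: assumes S: "S \<in> U" and vs: "valid S s"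
  shows "length (sorted_list_of_set (S - set s)) = card S - length s"
proof -
  have finS: "finite S" using U_fin[OF S] .
  have "distinct s" using vs by (simp add: valid_def lext_def)
  then have "card (set s) = length s" by (simp add: distinct_card)
  moreover have "set s \<subseteq> S" using vs valid_def by simp
  ultimately show ?thesis using finS by (simp add: card_Diff_subset finite_subset)
qed

lemma cw_drop: assumes S: "S \<in> U" and vs: "valid S s"
  shows "drop (card S - length s) (cw S s) = s"
  unfolding cw_def using cw_len[OF S vs] by (metis append_eq_conv_conj)

lemma cw_ip: assumes S: "S \<in> U" and vs: "valid S s" and nr: "NR S s"
  shows "ip (cw S s) = card S - length s"
proof -
  have finS: "finite S" using U_fin[OF S] .
  let ?p = "sorted_list_of_set (S - set s)"
  let ?k = "card S - length s"
  have lp: "length ?p = ?k" using cw_len[OF S vs] .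
  have "?k \<le> ip (cw S s)"
    by (rule ip_max) (use lp in \<open>auto simp: cw_def\<close>)
  moreover have "\<not> Suc ?k \<le> ip (cw S s)"
  proof
    assume a: "Suc ?k \<le> ip (cw S s)"
    have "sorted_wrt (<) (take (Suc ?k) (take (ip (cw S s)) (cw S s)))"
      using ip_sorted sorted_wrt_take by blast
    then have st: "sorted_wrt (<) (take (Suc ?k) (cw S s))" using a by (simp add: min_def)
    obtain a0 s' where s: "s = a0 # s'" using nr NR_def by (cases s) auto
    have "take (Suc ?k) (cw S s) = ?p @ [a0]" unfolding cw_def using lp s by simp
    then have "\<forall>x\<in>set ?p. x < a0" using st by (simp add: sorted_wrt_append)
    moreover obtain b where "b \<in> S - set s" "hd s < b" using nr NR_def by auto
    ultimately have "b < a0" using s finS by auto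
    then show False using \<open>hd s < b\<close> s by simp
  qed
  ultimately show ?thesis by simp
qed

lemma cw_ip_nil: assumes S: "S \<in> U" shows "ip (cw S []) = card S"
proof -
  have finS: "finite S" using U_fin[OF S] .
  have "card S \<le> ip (cw S [])" by (rule ip_max) (use finS in \<open>auto simp: cw_def\<close>)
  moreover have "ip (cw S []) \<le> card S" using ip_le[of "cw S []"] finS by (simp add: cw_def)
  ultimately show ?thesis by simp
qed

lemma cw_self: assumes S: "S \<in> U" and v: "v \<in> W S" shows "cw S (drop (ip v) v) = v"
proof -
  have finS: "finite S" using U_fin[OF S] .
  have lv: "lext R v" "set v = S" using v W_def by auto
  have dis: "distinct v" using lv lext_def by simp
  have "set (take (ip v) v) = S - set (drop (ip v) v)"
    using dis lv(2) by (metis Diff_triv append_take_drop_id distinct_append set_append Un_Diff Diff_cancel sup_bot.right_neutral)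
  moreover have "sorted_wrt (<) (take (ip v) v)" by (rule ip_sorted)
  ultimately have "take (ip v) v = sorted_list_of_set (S - set (drop (ip v) v))"
    using finS by (metis sorted_list_of_set_unique finite_Diff strict_sorted_iff distinct_card)
  then show ?thesis unfolding cw_def by (metis append_take_drop_id)
qed

lemma NR_drop: assumes S: "S \<in> U" and v: "v \<in> W S" and lt: "ip v < length v"
  shows "NR S (drop (ip v) v)"
proof -
  have lv: "lext R v" "set v = S" using v W_def by auto
  have dis: "distinct v" using lv lext_def by simp
  have ns: "\<not> sorted_wrt (<) (take (Suc (ip v)) v)" using ip_not_sorted[OF lt] .
  have "take (Suc (ip v)) v = take (ip v) v @ [v ! ip v]" using lt by (simp add: take_Suc_conv_app_nth)
  then obtain x where x: "x \<in> set (take (ip v) v)" "\<not> x < v ! ip v"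
    using ns ip_sorted[of v] by (auto simp: sorted_wrt_append)
  have vd: "v ! ip v \<in> set (drop (ip v) v)" using lt by (metis Cons_nth_drop_Suc list.set_intros(1))
  have dj: "set (take (ip v) v) \<inter> set (drop (ip v) v) = {}" using dis
    by (metis append_take_drop_id distinct_append)
  have "x \<noteq> v ! ip v" using x(1) vd dj by auto
  then have "v ! ip v < x" using x(2) by simp
  moreover have "x \<in> S - set (drop (ip v) v)" using x(1) dis lv(2)
    by (metis DiffI append_take_drop_id disjoint_iff distinct_append in_set_takeD)
  moreover have "hd (drop (ip v) v) = v ! ip v" using lt by (simp add: hd_drop_conv_nth)
  ultimately show ?thesis unfolding NR_def using lt by auto
qed

end

lemma similar_det:
  fixes A Q Uu :: "'b \<Rightarrow> 'b \<Rightarrow> 'a::comm_ring_1"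
  assumes fin: "finite X" and dQ: "det_on X Q = 1"
    and AQ: "\<And>w w'. w \<in> X \<Longrightarrow> w' \<in> X \<Longrightarrow> (\<Sum>v\<in>X. A w v * Q v w') = (\<Sum>v\<in>X. Q w v * Uu v w')"
  shows "det_on X (\<lambda>w w'. (if w = w' then lam else 0) - A w w') = det_on X (\<lambda>w w'. (if w = w' then lam else 0) - Uu w w')"
proof -
  let ?L1 = "\<lambda>w w'. (if w = w' then lam else 0) - A w w'"
  let ?L2 = "\<lambda>w w'. (if w = w' then lam else 0) - Uu w w'"
  have eq: "(\<Sum>v\<in>X. ?L1 w v * Q v w') = (\<Sum>v\<in>X. Q w v * ?L2 v w')" if w: "w \<in> X" and w': "w' \<in> X" for w w'
  proof -
    have "\<And>v. ?L1 w v * Q v w' = (if w = v then lam * Q v w' else 0) - A w v * Q v w'"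
      by (simp add: algebra_simps)
    then have "(\<Sum>v\<in>X. ?L1 w v * Q v w') = (\<Sum>v\<in>X. (if w = v then lam * Q v w' else 0)) - (\<Sum>v\<in>X. A w v * Q v w')"
      by (simp add: sum_subtractf)
    also have "(\<Sum>v\<in>X. (if w = v then lam * Q v w' else 0)) = lam * Q w w'" using fin w by simp
    finally have e1: "(\<Sum>v\<in>X. ?L1 w v * Q v w') = lam * Q w w' - (\<Sum>v\<in>X. A w v * Q v w')" .
    have "\<And>v. Q w v * ?L2 v w' = (if v = w' then Q w v * lam else 0) - Q w v * Uu v w'"
      by (simp add: algebra_simps)
    then have "(\<Sum>v\<in>X. Q w v * ?L2 v w') = (\<Sum>v\<in>X. (if v = w' then Q w v * lam else 0)) - (\<Sum>v\<in>X. Q w v * Uu v w')"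
      by (simp add: sum_subtractf)
    moreover
    moreover have "(\<Sum>v\<in>X. (if v = w' then Q w v * lam else 0)) = lam * Q w w'" using fin w' by (simp add: mult.commute)
    ultimately show ?thesis using AQ[OF w w'] e1 by simp
  qed
  have "det_on X ?L1 = det_on X ?L1 * det_on X Q" using dQ by simp
  also have "\<dots> = det_on X (\<lambda>w w'. \<Sum>v\<in>X. ?L1 w v * Q v w')" by (rule det_on_mult[OF fin, symmetric])
  also have "\<dots> = det_on X (\<lambda>w w'. \<Sum>v\<in>X. Q w v * ?L2 v w')"
    unfolding det_on_def by (rule sum.cong[OF refl], rule arg_cong2[where f="(*)"], simp, rule prod.cong[OF refl])
      (use eq permutes_in_image in force)
  also have "\<dots> = det_on X Q * det_on X ?L2" by (rule det_on_mult[OF fin])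
  also have "\<dots> = det_on X ?L2" using dQ by simp
  finally show ?thesis .
qed

context forest
begin

definition Am :: "nat set \<Rightarrow> (nat \<Rightarrow> 'a::comm_ring_1) \<Rightarrow> nat list \<Rightarrow> nat list \<Rightarrow> 'a" where
  "Am S x w w' = (\<Sum>i\<in>{i\<in>S. Tp R i w = w'}. x i)"

definition chi :: "nat set \<Rightarrow> (nat \<Rightarrow> 'a::comm_ring_1) \<Rightarrow> 'a \<Rightarrow> 'a" where
  "chi S x lam = det_on (W S) (\<lambda>w w'. (if w = w' then lam else 0) - Am S x w w')"

definition Qm :: "nat list \<Rightarrow> nat list \<Rightarrow> 'a::comm_ring_1" where
  "Qm v w' = of_bool (drop (ip w') v = drop (ip w') w')"

definition key :: "nat list \<Rightarrow> (nat \<times> nat set) option" where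
  "key v = (if ip v = length v then None else Some (v ! ip v, set (drop (Suc (ip v)) v)))"

fun ordk :: "(nat \<times> nat set) option \<Rightarrow> nat" where
  "ordk None = 0"
| "ordk (Some (a, S0)) = Suc (card S0)"

lemma Tp_W: "S \<in> U \<Longrightarrow> w \<in> W S \<Longrightarrow> Tp R i w \<in> W S"
  unfolding W_def using Tp_lext by auto

lemma W_distinct: "v \<in> W S \<Longrightarrow> distinct v"
  unfolding W_def lext_def by simp

lemma ordk_key: assumes S: "S \<in> U" and v: "v \<in> W S" shows "ordk (key v) = card S - ip v"
proof (cases "ip v = length v")
  case True then show ?thesis using W_length[OF S v] by (simp add: key_def)
next
  case False
  then have lt: "ip v < length v" using ip_le[of v] by simp
  have "card (set (drop (Suc (ip v)) v)) = length v - Suc (ip v)"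
    using W_distinct[OF v] by (simp add: distinct_card)
  then show ?thesis using False lt W_length[OF S v] by (simp add: key_def)
qed

lemma AQ_sum:
  fixes g :: "nat list \<Rightarrow> 'a::comm_ring_1"
  assumes S: "S \<in> U" and w: "w \<in> W S"
  shows "(\<Sum>v\<in>W S. Am S x w v * g v) = (\<Sum>i\<in>S. x i * g (Tp R i w))"
proof -
  have finW: "finite (W S)" using W_fin U_fin S by blast
  have finS: "finite S" using U_fin S by blast
  have "(\<Sum>v\<in>W S. Am S x w v * g v) = (\<Sum>v\<in>W S. \<Sum>i\<in>S. (if Tp R i w = v then x i * g v else 0))"
  proof (rule sum.cong[OF refl])
    fix v
    have "Am S x w v * g v = (\<Sum>i\<in>{i\<in>S. Tp R i w = v}. x i * g v)"
      unfolding Am_def by (simp add: sum_distrib_right)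
    also have "\<dots> = (\<Sum>i\<in>S. (if Tp R i w = v then x i * g v else 0))"
      using finS by (rule sum.inter_filter)
    finally show "Am S x w v * g v = (\<Sum>i\<in>S. (if Tp R i w = v then x i * g v else 0))" .
  qed
  also have "\<dots> = (\<Sum>i\<in>S. \<Sum>v\<in>W S. (if Tp R i w = v then x i * g v else 0))"
    by (rule sum.swap)
  also have "\<dots> = (\<Sum>i\<in>S. x i * g (Tp R i w))"
    using finW Tp_W[OF S w] by (intro sum.cong refl) (simp add: sum.delta)
  finally show ?thesis .
qed

lemma Q_offdiag: assumes S: "S \<in> U" and v: "v \<in> W S" and w: "w \<in> W S"
  and q: "drop (ip w) v = drop (ip w) w" and ne: "v \<noteq> w"
  shows "ip v < ip w"
proof (rule ccontr)
  assume "\<not> ip v < ip w"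
  then have le: "ip w \<le> ip v" by simp
  have "sorted_wrt (<) (take (ip w) (take (ip v) v))" using ip_sorted sorted_wrt_take by blast
  then have s1: "sorted_wrt (<) (take (ip w) v)" using le by (simp add: min_def)
  have s2: "sorted_wrt (<) (take (ip w) w)" by (rule ip_sorted)
  have dv: "distinct v" and dw: "distinct w" using W_distinct v w by auto
  have sv: "set v = S" and sw: "set w = S" using v w by (auto simp: W_def)
  have "set (take (ip w) v) = S - set (drop (ip w) v)" using dv sv
    by (metis Diff_triv append_take_drop_id distinct_append set_append Un_Diff Diff_cancel sup_bot.right_neutral)
  moreover have "set (take (ip w) w) = S - set (drop (ip w) w)" using dw sw
    by (metis Diff_triv append_take_drop_id distinct_append set_append Un_Diff Diff_cancel sup_bot.right_neutral)
  ultimately have "take (ip w) v = take (ip w) w"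
    using s1 s2 q by (metis sorted_distinct_set_unique strict_sorted_iff)
  then have "v = w" using q by (metis append_take_drop_id)
  then show False using ne by simp
qed

lemma detQ: assumes S: "S \<in> U" shows "det_on (W S) Qm = (1::'a::comm_ring_1)"
proof -
  have finW: "finite (W S)" using W_fin U_fin S by blast
  have z: "(Qm :: _ \<Rightarrow> _ \<Rightarrow> 'a) v w = 0" if v: "v \<in> W S" and w: "w \<in> W S" and ne: "v \<noteq> w" and o: "ip w \<le> ip v" for v w
  proof (rule ccontr)
    assume "(Qm :: _ \<Rightarrow> _ \<Rightarrow> 'a) v w \<noteq> 0"
    then have "drop (ip w) v = drop (ip w) w" by (simp add: Qm_def split: if_splits)
    then have "ip v < ip w" using Q_offdiag[OF S v w] ne by simp
    then show False using o by simp
  qed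
  have "det_on (W S) (Qm :: _ \<Rightarrow> _ \<Rightarrow> 'a) = (\<Prod>c\<in>id ` W S. det_on {x\<in>W S. id x = c} Qm)"
    by (rule det_on_blocks[OF finW, where ord = ip]) (use z in auto)
  also have "\<dots> = (\<Prod>c\<in>W S. (1::'a))"
  proof -
    have "\<And>c. c \<in> W S \<Longrightarrow> det_on {x\<in>W S. id x = c} Qm = (1::'a)"
    proof -
      fix c assume "c \<in> W S"
      then have "{x\<in>W S. id x = c} = {c}" by auto
      then show "det_on {x\<in>W S. id x = c} Qm = (1::'a)" by (simp add: Qm_def)
    qed
    then show ?thesis by simp
  qed
  finally show ?thesis by simp
qed


lemma valid_tl: assumes S: "S \<in> U" and v: "valid S (a # t)" shows "valid S t"
proof -
  have l: "lext R (a # t)" and U1: "set (a # t) \<in> U" and sub: "set (a # t) \<subseteq> S" using v valid_def by auto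
  have "set t \<in> U" unfolding upper_sets_def
  proof (intro CollectI conjI ballI allI impI)
    show "set t \<subseteq> {1..n}" using U_sub[OF U1] by auto
    fix x y assume x: "x \<in> set t" and xy: "R x y"
    have "y \<in> set (a # t)" using U_closed[OF U1, of x y] x xy by auto
    moreover have "y \<noteq> a"
    proof
      assume "y = a"
      then have "\<not> prec R x a" using l x by (simp add: lext_def)
      moreover have "x \<noteq> a" using l x by (auto simp: lext_def)
      ultimately show False using xy \<open>y = a\<close> by (simp add: prec_def)
    qed
    ultimately show "y \<in> set t" by simp
  qed
  then show ?thesis using l sub by (simp add: valid_def lext_def)
qed

lemma valid_cons: assumes v: "valid S t" and a: "a \<in> S - set t" and U1: "insert a (set t) \<in> U"
  shows "valid S (a # t)"
proof -
  have "\<forall>y\<in>set t. \<not> prec R y a"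
  proof (intro ballI notI)
    fix y assume "y \<in> set t" "prec R y a"
    then have "a \<in> set t" using U_closed[of "set t" y a] v by (auto simp: valid_def prec_def)
    then show False using a by simp
  qed
  then show ?thesis using v a U1 by (auto simp: valid_def lext_def)
qed

lemma suffix_letter: assumes S: "S \<in> U" and w: "w \<in> W S" and j: "j < card S"
  shows "w ! j \<in> S - set (drop (Suc j) w)" "insert (w ! j) (set (drop (Suc j) w)) \<in> U"
    "drop j w = w ! j # drop (Suc j) w"
proof -
  have len: "length w = card S" using W_length[OF S w] .
  show dj: "drop j w = w ! j # drop (Suc j) w" using j len by (simp add: Cons_nth_drop_Suc)
  have vd: "valid S (drop j w)" using valid_drop[OF S w] .
  have "distinct (drop j w)" using W_distinct[OF w] by simp
  then have "w ! j \<notin> set (drop (Suc j) w)" using dj by (metis distinct.simps(2))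
  moreover have "w ! j \<in> S" using w j len by (auto simp: W_def)
  ultimately show "w ! j \<in> S - set (drop (Suc j) w)" by simp
  show "insert (w ! j) (set (drop (Suc j) w)) \<in> U" using vd dj by (metis list.simps(15) valid_def)
qed

lemma E_NR:
  assumes S: "S \<in> U" and vs: "valid S s" and nr: "NR S s" and w: "w \<in> W S"
  shows "(of_bool (drop (card S - length s) w = s) :: 'a::comm_ring_1) = (\<Sum>v\<in>W S. Qm w v * (if v = cw S s then 1 else 0))"
    and "card S - ip (cw S s) = length s"
proof -
  have finW: "finite (W S)" using W_fin U_fin S by blast
  have v1: "cw S s \<in> W S" using cw_W[OF S vs] .
  have ls: "length s \<le> card S"
  proof -
    have "distinct s" using vs by (simp add: valid_def lext_def)
    then have "length s = card (set s)" by (simp add: distinct_card)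
    also have "\<dots> \<le> card S" using vs U_fin[OF S] by (simp add: valid_def card_mono)
    finally show ?thesis .
  qed
  have "(\<Sum>v\<in>W S. Qm w v * (if v = cw S s then 1 else 0)) = (Qm w (cw S s) :: 'a)"
    using finW v1 by (simp add: if_distrib cong: if_cong)
  also have "\<dots> = of_bool (drop (card S - length s) w = s)"
    unfolding Qm_def cw_ip[OF S vs nr] cw_drop[OF S vs] by simp
  finally show "(of_bool (drop (card S - length s) w = s) :: 'a) = (\<Sum>v\<in>W S. Qm w v * (if v = cw S s then 1 else 0))" by simp
  show "card S - ip (cw S s) = length s" using cw_ip[OF S vs nr] ls by simp
qed

lemma E:
  assumes S: "S \<in> U"
  shows "k \<le> card S \<Longrightarrow> valid S s \<Longrightarrow> length s = k \<Longrightarrow>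
    \<exists>c::nat list \<Rightarrow> 'a::comm_ring_1. (\<forall>w\<in>W S. of_bool (drop (card S - k) w = s) = (\<Sum>v\<in>W S. Qm w v * c v))
        \<and> (\<forall>v\<in>W S. k < card S - ip v \<longrightarrow> c v = 0)"
proof (induction k arbitrary: s)
  case 0
  have finW: "finite (W S)" using W_fin U_fin S by blast
  have s: "s = []" using 0 by simp
  let ?w0 = "cw S []"
  have w0: "?w0 \<in> W S" using cw_W[OF S] U_empty by (simp add: valid_def lext_def)
  have ip0: "ip ?w0 = card S" using cw_ip_nil[OF S] .
  show ?case
  proof (rule exI[where x = "\<lambda>v. if v = ?w0 then 1 else 0"], intro conjI ballI impI)
    fix w assume w: "w \<in> W S"
    have "(\<Sum>v\<in>W S. Qm w v * (if v = ?w0 then 1 else 0)) = (Qm w ?w0 :: 'a)"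
      using finW w0 by (simp add: if_distrib cong: if_cong)
    also have "\<dots> = 1" unfolding Qm_def ip0 using W_length[OF S w] W_length[OF S w0] by simp
    finally show "of_bool (drop (card S - 0) w = s) = (\<Sum>v\<in>W S. Qm w v * (if v = ?w0 then 1 else (0::'a)))"
      using W_length[OF S w] s by simp
  next
    fix v assume "v \<in> W S" "0 < card S - ip v"
    then show "(if v = ?w0 then 1 else 0) = (0::'a)" using ip0 by auto
  qed
next
  case (Suc j)
  have finW: "finite (W S)" using W_fin U_fin S by blast
  have finS: "finite S" using U_fin S by blast
  obtain a t where s: "s = a # t" using Suc.prems(3) by (cases s) auto
  have vt: "valid S t" using valid_tl[OF S] Suc.prems(2) s by simp
  have lt: "length t = j" using Suc.prems(3) s by simp
  show ?case
  proof (cases "NR S s")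
    case True
    show ?thesis
    proof (rule exI[where x = "\<lambda>v. if v = cw S s then 1 else 0"], intro conjI ballI impI)
      fix w assume w: "w \<in> W S"
      show "of_bool (drop (card S - Suc j) w = s) = (\<Sum>v\<in>W S. Qm w v * (if v = cw S s then 1 else (0::'a)))"
        using E_NR(1)[OF S Suc.prems(2) True w] Suc.prems(3) by simp
    next
      fix v assume v: "v \<in> W S" and gt: "Suc j < card S - ip v"
      show "(if v = cw S s then 1 else 0) = (0::'a)"
        using E_NR(2)[OF S Suc.prems(2) True v] gt Suc.prems(3) by auto
    qed
  next
    case False
    have aS: "a \<in> S - set t" using Suc.prems(2) s by (auto simp: valid_def lext_def)
    have amax: "\<forall>b\<in>S - set s. b \<le> a" using False s by (auto simp: NR_def not_less)
    obtain ct where ct: "\<forall>w\<in>W S. of_bool (drop (card S - j) w = t) = (\<Sum>v\<in>W S. Qm w v * ct v)"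
      "\<forall>v\<in>W S. j < card S - ip v \<longrightarrow> ct v = (0::'a)"
      using Suc.IH[OF _ vt lt] Suc.prems(1) by auto
    define B where "B = {b \<in> S - set t. insert b (set t) \<in> U \<and> b \<noteq> a}"
    have finB: "finite B" unfolding B_def using finS by simp
    have vB: "valid S (b # t)" and nrB: "NR S (b # t)" if b: "b \<in> B" for b
    proof -
      show "valid S (b # t)" using valid_cons[OF vt] b B_def by auto
      have "b \<in> S - set s" using b s B_def by auto
      then have "b < a" using amax b B_def by force
      moreover have "a \<in> S - set (b # t)" using aS b B_def by auto
      ultimately show "NR S (b # t)" unfolding NR_def by auto
    qed
    define c where "c = (\<lambda>v. ct v - (\<Sum>b\<in>B. if v = cw S (b # t) then 1 else (0::'a)))"
    show ?thesis
    proof (rule exI[where x = c], intro conjI ballI impI)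
      fix w assume w: "w \<in> W S"
      have len: "length w = card S" using W_length[OF S w] .
      have kN: "card S - Suc j < card S" using Suc.prems(1) by simp
      have NS: "card S - j = Suc (card S - Suc j)" using Suc.prems(1) by simp
      note sl = suffix_letter[OF S w kN]
      have ident: "(of_bool (drop (card S - Suc j) w = s) :: 'a)
          = of_bool (drop (card S - j) w = t) - (\<Sum>b\<in>B. of_bool (drop (card S - Suc j) w = b # t))"
      proof (cases "drop (card S - j) w = t")
        case True
        let ?c0 = "w ! (card S - Suc j)"
        have dk: "drop (card S - Suc j) w = ?c0 # t" using sl(3) NS True by simp
        show ?thesis
        proof (cases "?c0 = a")
          case True
          have "\<forall>b\<in>B. ?c0 \<noteq> b" using True B_def by auto
          then show ?thesis using dk s True \<open>drop (card S - j) w = t\<close> by simp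
        next
          case False
          have c0B: "?c0 \<in> B" using sl(1,2) NS True False B_def by simp
          have "(\<Sum>b\<in>B. (of_bool (drop (card S - Suc j) w = b # t) :: 'a)) = (\<Sum>b\<in>B. if b = ?c0 then 1 else 0)"
            unfolding dk by (rule sum.cong) auto
          also have "\<dots> = 1" using finB c0B by simp
          finally show ?thesis using dk s False \<open>drop (card S - j) w = t\<close> by simp
        qed
      next
        case False
        show ?thesis using False sl(3) NS s by simp
      qed
      have "(\<Sum>v\<in>W S. Qm w v * c v) = (\<Sum>v\<in>W S. Qm w v * ct v) - (\<Sum>b\<in>B. \<Sum>v\<in>W S. Qm w v * (if v = cw S (b # t) then 1 else 0))"
        unfolding c_def by (simp add: algebra_simps sum_subtractf sum_distrib_left sum.swap[of _ B])
      also have "(\<Sum>b\<in>B. \<Sum>v\<in>W S. Qm w v * (if v = cw S (b # t) then 1 else 0)) = (\<Sum>b\<in>B. (of_bool (drop (card S - Suc j) w = b # t) :: 'a))"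
      proof (rule sum.cong[OF refl])
        fix b assume b: "b \<in> B"
        show "(\<Sum>v\<in>W S. Qm w v * (if v = cw S (b # t) then 1 else 0)) = (of_bool (drop (card S - Suc j) w = b # t) :: 'a)"
          using E_NR(1)[OF S vB[OF b] nrB[OF b] w, unfolded length_Cons lt] by (rule sym)
      qed
      finally show "of_bool (drop (card S - Suc j) w = s) = (\<Sum>v\<in>W S. Qm w v * c v)"
        using ident ct(1) w by simp
    next
      fix v assume v: "v \<in> W S" and gt: "Suc j < card S - ip v"
      have "ct v = 0" using ct(2) v gt by simp
      moreover have "\<forall>b\<in>B. v \<noteq> cw S (b # t)"
      proof (intro ballI notI)
        fix b assume b: "b \<in> B" and vb: "v = cw S (b # t)"
        have "card S - ip v = Suc j" using E_NR(2)[OF S vB[OF b] nrB[OF b] v] vb lt by simp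
        then show False using gt by simp
      qed
      ultimately show "c v = 0" unfolding c_def by simp
    qed
  qed
qed


lemma drop_Tp_in:
  assumes S: "S \<in> U" and w: "w \<in> W S" and r: "r < card S" and i: "i \<in> set (drop (Suc r) w)"
  shows "drop r (Tp R i w) = w ! r # Tp R i (drop (Suc r) w)"
proof -
  note sl = suffix_letter[OF S w r]
  have len: "length w = card S" using W_length[OF S w] .
  have dw: "distinct w" using W_distinct[OF w] .
  have wsplit: "w = take r w @ (w ! r # drop (Suc r) w)" using sl(3) by (metis append_take_drop_id)
  have "set (take r w) \<inter> set (drop r w) = {}" using dw by (metis append_take_drop_id distinct_append)
  then have "i \<notin> set (take r w)" using i sl(3) by auto
  then have "Tp R i w = take r w @ Tp R i (w ! r # drop (Suc r) w)" using Tp_notin wsplit by metis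
  moreover have "w ! r \<noteq> i" using sl(1) i by auto
  ultimately have "Tp R i w = take r w @ (w ! r # Tp R i (drop (Suc r) w))" by simp
  moreover have "length (take r w) = r" using r len by simp
  ultimately show ?thesis by (metis append_eq_conv_conj)
qed

lemma drop_Tp_out:
  assumes S: "S \<in> U" and w: "w \<in> W S" and r: "r < card S" and iS: "i \<in> S" and i: "i \<notin> set (drop (Suc r) w)"
  shows "drop r (Tp R i w) = bub R (mtop i (set (drop (Suc r) w)) # drop (Suc r) w)"
proof -
  have len: "length w = card S" using W_length[OF S w] .
  have iw: "i \<in> set w" using iS w by (simp add: W_def)
  obtain r' where r': "Tp R i w = r' @ bub R (mtop i (set (drop (Suc r) w)) # drop (Suc r) w)"
    "Suc (length r') = length (take (Suc r) w)"
    using Tp_suffix_out[OF S w iw _ i, of "take (Suc r) w"] by auto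
  have "length r' = r" using r' r len by simp
  then show ?thesis using r'(1) by simp
qed

definition Gf :: "(nat \<Rightarrow> 'a::comm_ring_1) \<Rightarrow> nat list \<Rightarrow> nat list \<Rightarrow> 'a" where
  "Gf x t' t = (\<Sum>i\<in>set t. x i * of_bool (Tp R i t = t'))"

definition c1f :: "(nat \<Rightarrow> 'a::comm_ring_1) \<Rightarrow> nat list \<Rightarrow> nat list \<Rightarrow> 'a" where
  "c1f x w' v = of_bool (ip v = ip w' \<and> v ! ip w' = w' ! ip w' \<and> set (drop (Suc (ip w')) v) = set (drop (Suc (ip w')) w'))
      * Gf x (drop (Suc (ip w')) w') (drop (Suc (ip v)) v)"

lemma Gf_zero: "set t \<noteq> set t' \<Longrightarrow> Gf x t' t = 0"
  unfolding Gf_def by (rule sum.neutral) auto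

lemma FP:
  assumes S: "S \<in> U" and w: "w \<in> W S" and w': "w' \<in> W S" and lt: "ip w' < length w'"
  shows "(of_bool (w ! ip w' = w' ! ip w') :: 'a::comm_ring_1) * Gf x (drop (Suc (ip w')) w') (drop (Suc (ip w')) w)
     = (\<Sum>v\<in>W S. Qm w v * c1f x w' v)"
proof -
  let ?r = "ip w'"
  let ?t = "drop (Suc ?r) w" and ?t' = "drop (Suc ?r) w'"
  have finW: "finite (W S)" using W_fin U_fin S by blast
  have lw': "length w' = card S" using W_length[OF S w'] .
  have rN: "?r < card S" using lt lw' by simp
  note slw = suffix_letter[OF S w rN] and slw' = suffix_letter[OF S w' rN]
  have key_eq: "v ! ?r = w ! ?r \<and> drop (Suc ?r) v = ?t" if v: "v \<in> W S" and dv: "drop ?r v = drop ?r w" for v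
  proof -
    have "drop ?r v = v ! ?r # drop (Suc ?r) v" using suffix_letter(3)[OF S v rN] .
    then show ?thesis using dv slw(3) by simp
  qed
  show ?thesis
  proof (cases "w ! ?r = w' ! ?r \<and> set ?t = set ?t'")
    case True
    let ?v0 = "cw S (drop ?r w)"
    have vs: "valid S (drop ?r w)" using valid_drop[OF S w] .
    have nr': "NR S (drop ?r w')" using NR_drop[OF S w' lt] .
    have "set (drop ?r w) = set (drop ?r w')" using True slw(3) slw'(3) by simp
    moreover have "hd (drop ?r w) = hd (drop ?r w')" using True slw(3) slw'(3) by simp
    ultimately have nr: "NR S (drop ?r w)" using nr' slw(3) by (simp add: NR_def)
    have lenw: "length (drop ?r w) = card S - ?r" using W_length[OF S w] by simp
    have v0: "?v0 \<in> W S" using cw_W[OF S vs] .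
    have ipv0: "ip ?v0 = ?r" using cw_ip[OF S vs nr] lenw rN by simp
    have dv0: "drop ?r ?v0 = drop ?r w" using cw_drop[OF S vs] lenw rN by simp
    have others: "Qm w v * c1f x w' v = 0" if v: "v \<in> W S - {?v0}" for v
    proof (rule ccontr)
      assume nz: "Qm w v * c1f x w' v \<noteq> (0::'a)"
      then have ipv: "ip v = ?r" unfolding c1f_def by (auto simp: of_bool_def split: if_splits)
      have "drop (ip v) w = drop (ip v) v" using nz unfolding Qm_def by (auto simp: of_bool_def split: if_splits)
      then have "cw S (drop ?r w) = v" using cw_self[OF S] v ipv by (metis DiffD1)
      then show False using v by simp
    qed
    have "(\<Sum>v\<in>W S. Qm w v * c1f x w' v) = Qm w ?v0 * c1f x w' ?v0 + (\<Sum>v\<in>W S - {?v0}. Qm w v * c1f x w' v)"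
      using finW v0 by (simp add: sum.remove)
    also have "(\<Sum>v\<in>W S - {?v0}. Qm w v * c1f x w' v) = 0" using others by (intro sum.neutral) blast
    also have "Qm w ?v0 = (1::'a)" unfolding Qm_def ipv0 dv0 by simp
    also have "c1f x w' ?v0 = Gf x ?t' ?t"
      using key_eq[OF v0 dv0] True ipv0 unfolding c1f_def by simp
    finally show ?thesis using True by simp
  next
    case False
    have lhs: "(of_bool (w ! ?r = w' ! ?r) :: 'a) * Gf x ?t' ?t = 0"
      using False Gf_zero by auto
    have "Qm w v * c1f x w' v = 0" if v: "v \<in> W S" for v
    proof (rule ccontr)
      assume nz: "Qm w v * c1f x w' v \<noteq> (0::'a)"
      then have c: "ip v = ?r \<and> v ! ?r = w' ! ?r \<and> set (drop (Suc ?r) v) = set ?t'"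
        unfolding c1f_def by (auto simp: of_bool_def split: if_splits)
      have "drop (ip v) w = drop (ip v) v" using nz unfolding Qm_def by (auto simp: of_bool_def split: if_splits)
      then have "v ! ?r = w ! ?r \<and> drop (Suc ?r) v = ?t" using key_eq[OF v] c by simp
      then show False using c False by simp
    qed
    then have "(\<Sum>v\<in>W S. Qm w v * c1f x w' v) = 0" by (simp add: sum.neutral)
    then show ?thesis using lhs by simp
  qed
qed


definition Hf :: "nat set \<Rightarrow> (nat \<Rightarrow> 'a::comm_ring_1) \<Rightarrow> nat list \<Rightarrow> nat list \<Rightarrow> 'a" where
  "Hf S x w' t = (\<Sum>i\<in>S - set t. x i * of_bool (bub R (mtop i (set t) # t) = drop (ip w') w'))"

definition Vset :: "nat set \<Rightarrow> nat \<Rightarrow> nat list set" where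
  "Vset S k = {t. valid S t \<and> length t = k}"

definition Dm :: "nat set \<Rightarrow> (nat \<Rightarrow> 'a::comm_ring_1) \<Rightarrow> nat list \<Rightarrow> nat list \<Rightarrow> 'a" where
  "Dm S x w' v = (if ip w' = length w' then (\<Sum>i\<in>S. x i)
      else Gf x (drop (Suc (ip w')) w') (drop (Suc (ip v)) v))"

lemma Vset_fin: assumes S: "S \<in> U" shows "finite (Vset S k)"
proof -
  have "Vset S k \<subseteq> {xs. set xs \<subseteq> S \<and> length xs = k}" unfolding Vset_def valid_def by auto
  moreover have "finite {xs. set xs \<subseteq> S \<and> length xs = k}" using U_fin[OF S] by (rule finite_lists_length_eq)
  ultimately show ?thesis by (rule finite_subset)
qed

lemma column_pos:
  assumes S: "S \<in> U" and w': "w' \<in> W S" and lt: "ip w' < length w'"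
  shows "\<exists>u::nat list \<Rightarrow> 'a::comm_ring_1. (\<forall>w\<in>W S. (\<Sum>v\<in>W S. Am S x w v * Qm v w') = (\<Sum>v\<in>W S. Qm w v * u v))
     \<and> (\<forall>v\<in>W S. u v \<noteq> 0 \<longrightarrow> ip w' < ip v \<or> key v = key w')
     \<and> (\<forall>v\<in>W S. key v = key w' \<longrightarrow> u v = Dm S x w' v)"
proof -
  let ?r = "ip w'"
  let ?t' = "drop (Suc ?r) w'"
  define k' where "k' = card S - Suc ?r"
  have finW: "finite (W S)" using W_fin U_fin S by blast
  have finS: "finite S" using U_fin S by blast
  have lw': "length w' = card S" using W_length[OF S w'] .
  have rN: "?r < card S" using lt lw' by simp
  have k'N: "k' \<le> card S" and Nk': "card S - k' = Suc ?r" using rN k'_def by auto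
  note slw' = suffix_letter[OF S w' rN]
  have "\<forall>t0\<in>Vset S k'. \<exists>c::nat list \<Rightarrow> 'a. (\<forall>w\<in>W S. of_bool (drop (card S - k') w = t0) = (\<Sum>v\<in>W S. Qm w v * c v))
        \<and> (\<forall>v\<in>W S. k' < card S - ip v \<longrightarrow> c v = 0)"
    using E[OF S k'N] unfolding Vset_def by blast
  then obtain C where C: "\<And>t0. t0 \<in> Vset S k' \<Longrightarrow> (\<forall>w\<in>W S. of_bool (drop (card S - k') w = t0) = (\<Sum>v\<in>W S. Qm w v * C t0 v))
        \<and> (\<forall>v\<in>W S. k' < card S - ip v \<longrightarrow> C t0 v = (0::'a))"
    by metis
  define u where "u = (\<lambda>v. c1f x w' v + (\<Sum>t0\<in>Vset S k'. Hf S x w' t0 * C t0 v))"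
  have finV: "finite (Vset S k')" using Vset_fin[OF S] .
  show ?thesis
  proof (rule exI[where x = u], intro conjI ballI impI)
    fix w assume w: "w \<in> W S"
    let ?t = "drop (Suc ?r) w"
    note slw = suffix_letter[OF S w rN]
    have tS: "set ?t \<subseteq> S" using w by (auto simp: W_def dest: in_set_dropD)
    have "(\<Sum>v\<in>W S. Am S x w v * Qm v w') = (\<Sum>i\<in>S. x i * Qm (Tp R i w) w')" by (rule AQ_sum[OF S w])
    also have "\<dots> = (\<Sum>i\<in>S. x i * of_bool (drop ?r (Tp R i w) = drop ?r w'))" by (simp add: Qm_def)
    also have "\<dots> = (\<Sum>i\<in>S - set ?t. x i * of_bool (drop ?r (Tp R i w) = drop ?r w'))
                  + (\<Sum>i\<in>set ?t. x i * of_bool (drop ?r (Tp R i w) = drop ?r w'))"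
      by (rule sum.subset_diff[OF tS finS])
    also have "(\<Sum>i\<in>set ?t. x i * of_bool (drop ?r (Tp R i w) = drop ?r w'))
        = (\<Sum>i\<in>set ?t. of_bool (w ! ?r = w' ! ?r) * (x i * of_bool (Tp R i ?t = ?t')))"
    proof (rule sum.cong[OF refl])
      fix i assume i: "i \<in> set ?t"
      show "x i * of_bool (drop ?r (Tp R i w) = drop ?r w') = of_bool (w ! ?r = w' ! ?r) * (x i * of_bool (Tp R i ?t = ?t'))"
        unfolding drop_Tp_in[OF S w rN i] slw'(3) by simp
    qed
    also have "\<dots> = of_bool (w ! ?r = w' ! ?r) * Gf x ?t' ?t" unfolding Gf_def by (simp add: sum_distrib_left)
    also have "\<dots> = (\<Sum>v\<in>W S. Qm w v * c1f x w' v)" by (rule FP[OF S w w' lt])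
    also have "(\<Sum>i\<in>S - set ?t. x i * of_bool (drop ?r (Tp R i w) = drop ?r w')) = Hf S x w' ?t"
      unfolding Hf_def by (rule sum.cong[OF refl]) (simp add: drop_Tp_out[OF S w rN])
    also have "Hf S x w' ?t = (\<Sum>t0\<in>Vset S k'. of_bool (drop (card S - k') w = t0) * Hf S x w' t0)"
    proof -
      have tV: "?t \<in> Vset S k'" unfolding Vset_def using valid_drop[OF S w] W_length[OF S w] k'_def by simp
      have "\<And>t0. (of_bool (?t = t0) :: 'a) * Hf S x w' t0 = (if ?t = t0 then Hf S x w' t0 else 0)" by simp
      then show ?thesis unfolding Nk' using finV tV by (simp add: sum.delta)
    qed
    also have "\<dots> = (\<Sum>t0\<in>Vset S k'. Hf S x w' t0 * (\<Sum>v\<in>W S. Qm w v * C t0 v))"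
      using C w by (intro sum.cong refl) (simp add: mult.commute)
    also have "\<dots> = (\<Sum>v\<in>W S. Qm w v * (\<Sum>t0\<in>Vset S k'. Hf S x w' t0 * C t0 v))"
      by (simp add: sum_distrib_left sum.swap[of _ "W S"] algebra_simps)
    finally show "(\<Sum>v\<in>W S. Am S x w v * Qm v w') = (\<Sum>v\<in>W S. Qm w v * u v)"
      unfolding u_def by (simp add: algebra_simps sum.distrib)
  next
    fix v assume v: "v \<in> W S" and nz: "u v \<noteq> 0"
    show "ip w' < ip v \<or> key v = key w'"
    proof (cases "c1f x w' v = 0")
      case True
      then obtain t0 where "t0 \<in> Vset S k'" "C t0 v \<noteq> 0" using nz unfolding u_def
        by (metis (no_types, lifting) add_0 mult_zero_right sum.neutral)
      then have "\<not> k' < card S - ip v" using C v by blast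
      moreover have "ip v \<le> card S" using ip_le[of v] W_length[OF S v] by simp
      ultimately have "ip w' < ip v" using k'_def rN by linarith
      then show ?thesis by simp
    next
      case False
      then have c: "ip v = ?r \<and> v ! ?r = w' ! ?r \<and> set (drop (Suc ?r) v) = set ?t'"
        unfolding c1f_def by (auto simp: of_bool_def split: if_splits)
      then show ?thesis using lt lw' W_length[OF S v] by (simp add: key_def)
    qed
  next
    fix v assume v: "v \<in> W S" and kv: "key v = key w'"
    have kw': "key w' = Some (w' ! ?r, set ?t')" using lt by (simp add: key_def)
    then have nl: "ip v \<noteq> length v" and kv2: "v ! ip v = w' ! ?r" "set (drop (Suc (ip v)) v) = set ?t'"
      using kv by (auto simp: key_def split: if_splits)
    have lv: "length v = card S" using W_length[OF S v] .
    have "card (set (drop (Suc (ip v)) v)) = card S - Suc (ip v)"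
      using W_distinct[OF v] lv by (simp add: distinct_card)
    moreover have "card (set ?t') = card S - Suc ?r"
      using W_distinct[OF w'] lw' by (simp add: distinct_card)
    moreover have "ip v < card S" using nl ip_le[of v] lv by simp
    ultimately have ipv: "ip v = ?r" using kv2(2) rN by simp
    have "\<forall>t0\<in>Vset S k'. C t0 v = 0" using C v ipv k'_def rN by simp
    then have "u v = c1f x w' v" unfolding u_def by simp
    also have "\<dots> = Dm S x w' v" unfolding c1f_def Dm_def using ipv kv2 lt by simp
    finally show "u v = Dm S x w' v" .
  qed
qed

lemma column_zero:
  assumes S: "S \<in> U" and w': "w' \<in> W S" and eq: "ip w' = length w'"
  shows "\<exists>u::nat list \<Rightarrow> 'a::comm_ring_1. (\<forall>w\<in>W S. (\<Sum>v\<in>W S. Am S x w v * Qm v w') = (\<Sum>v\<in>W S. Qm w v * u v))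
     \<and> (\<forall>v\<in>W S. u v \<noteq> 0 \<longrightarrow> ip w' < ip v \<or> key v = key w')
     \<and> (\<forall>v\<in>W S. key v = key w' \<longrightarrow> u v = Dm S x w' v)"
proof -
  have finW: "finite (W S)" using W_fin U_fin S by blast
  have lw': "length w' = card S" using W_length[OF S w'] .
  have Q1: "Qm v w' = (1::'a)" if v: "v \<in> W S" for v
    unfolding Qm_def eq using W_length[OF S v] lw' by simp
  show ?thesis
  proof (rule exI[where x = "\<lambda>v. if v = w' then (\<Sum>i\<in>S. x i) else 0"], intro conjI ballI impI)
    fix w assume w: "w \<in> W S"
    have "(\<Sum>v\<in>W S. Am S x w v * Qm v w') = (\<Sum>i\<in>S. x i * Qm (Tp R i w) w')" by (rule AQ_sum[OF S w])
    also have "\<dots> = (\<Sum>i\<in>S. x i)" using Q1 Tp_W[OF S w] by simp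
    also have "\<dots> = (\<Sum>v\<in>W S. Qm w v * (if v = w' then (\<Sum>i\<in>S. x i) else 0))"
      using finW w' Q1[OF w] by (simp add: if_distrib cong: if_cong)
    finally show "(\<Sum>v\<in>W S. Am S x w v * Qm v w') = (\<Sum>v\<in>W S. Qm w v * (if v = w' then (\<Sum>i\<in>S. x i) else 0))" .
  next
    fix v assume "v \<in> W S" "(if v = w' then (\<Sum>i\<in>S. x i) else (0::'a)) \<noteq> 0"
    then show "ip w' < ip v \<or> key v = key w'" by (auto split: if_splits)
  next
    fix v assume v: "v \<in> W S" and kv: "key v = key w'"
    then have "ip v = length v" using eq by (auto simp: key_def split: if_splits)
    then have "v = cw S []" using cw_self[OF S v] by simp
    moreover have "w' = cw S []" using cw_self[OF S w'] eq by simp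
    ultimately show "(if v = w' then (\<Sum>i\<in>S. x i) else 0) = Dm S x w' v" using eq by (simp add: Dm_def)
  qed
qed

end

lemma det_on_cong:
  assumes "\<And>x y. x \<in> X \<Longrightarrow> y \<in> X \<Longrightarrow> F x y = G x y"
  shows "det_on X F = det_on X G"
  unfolding det_on_def
proof (rule sum.cong[OF refl])
  fix p assume "p \<in> {p. p permutes X}"
  then have "\<And>x. x \<in> X \<Longrightarrow> p x \<in> X" by (simp add: permutes_in_image)
  then show "of_int (sign p) * (\<Prod>i\<in>X. F i (p i)) = of_int (sign p) * (\<Prod>i\<in>X. G i (p i))"
    using assms by simp
qed

context forest
begin

lemma chi_blocks:
  assumes S: "S \<in> U"
  shows "chi S x lam = (\<Prod>c\<in>key ` W S. det_on {v\<in>W S. key v = c} (\<lambda>v w'. (if v = w' then lam else 0) - Dm S x w' v))"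
proof -
  have finW: "finite (W S)" using W_fin U_fin S by blast
  define P where "P w' (u::nat list \<Rightarrow> 'a) \<longleftrightarrow> (\<forall>w\<in>W S. (\<Sum>v\<in>W S. Am S x w v * Qm v w') = (\<Sum>v\<in>W S. Qm w v * u v))
     \<and> (\<forall>v\<in>W S. u v \<noteq> 0 \<longrightarrow> ip w' < ip v \<or> key v = key w')
     \<and> (\<forall>v\<in>W S. key v = key w' \<longrightarrow> u v = Dm S x w' v)" for w' u
  have ex: "\<forall>w'\<in>W S. \<exists>u. P w' u"
  proof
    fix w' assume w': "w' \<in> W S"
    show "\<exists>u. P w' u"
    proof (cases "ip w' = length w'")
      case True then show ?thesis using column_zero[OF S w', of x] unfolding P_def by blast
    next
      case False
      then have "ip w' < length w'" using ip_le[of w'] by simp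
      then show ?thesis using column_pos[OF S w', of x] unfolding P_def by blast
    qed
  qed
  obtain Uc where Uc: "\<forall>w'\<in>W S. P w' (Uc w')" using bchoice[OF ex] by blast
  have Uc1: "(\<Sum>v\<in>W S. Am S x w v * Qm v w') = (\<Sum>v\<in>W S. Qm w v * Uc w' v)" if "w \<in> W S" "w' \<in> W S" for w w'
    using Uc that unfolding P_def by blast
  have Uc2: "ip w' < ip v \<or> key v = key w'" if "w' \<in> W S" "v \<in> W S" "Uc w' v \<noteq> 0" for w' v
    using Uc that unfolding P_def by blast
  have Uc3: "Uc w' v = Dm S x w' v" if "w' \<in> W S" "v \<in> W S" "key v = key w'" for w' v
    using Uc that unfolding P_def by blast
  define Um where "Um = (\<lambda>v w'. Uc w' v)"
  have "chi S x lam = det_on (W S) (\<lambda>w w'. (if w = w' then lam else 0) - Um w w')"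
    unfolding chi_def Um_def
    by (rule similar_det[OF finW detQ[OF S]]) (rule Uc1)
  also have "\<dots> = (\<Prod>c\<in>key ` W S. det_on {v\<in>W S. key v = c} (\<lambda>w w'. (if w = w' then lam else 0) - Um w w'))"
  proof (rule det_on_blocks[OF finW, where ord = ordk])
    fix v w' assume v: "v \<in> W S" and w': "w' \<in> W S" and ne: "key v \<noteq> key w'" and o: "ordk (key w') \<le> ordk (key v)"
    have "v \<noteq> w'" using ne by auto
    moreover have "Um v w' = 0"
    proof (rule ccontr)
      assume "Um v w' \<noteq> 0"
      then have "ip w' < ip v" using Uc2[OF w' v] ne unfolding Um_def by simp
      moreover have "ip v \<le> card S" using ip_le[of v] W_length[OF S v] by simp
      ultimately show False using o ordk_key[OF S v] ordk_key[OF S w'] by simp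
    qed
    ultimately show "(if v = w' then lam else 0) - Um v w' = 0" by simp
  qed
  also have "\<dots> = (\<Prod>c\<in>key ` W S. det_on {v\<in>W S. key v = c} (\<lambda>v w'. (if v = w' then lam else 0) - Dm S x w' v))"
  proof (rule prod.cong[OF refl], rule det_on_cong)
    fix c v w' assume "v \<in> {v\<in>W S. key v = c}" "w' \<in> {v\<in>W S. key v = c}"
    then show "(if v = w' then lam else 0) - Um v w' = (if v = w' then lam else 0) - Dm S x w' v"
      using Uc3 unfolding Um_def by simp
  qed
  finally show ?thesis .
qed


lemma key_cw:
  assumes S: "S \<in> U" and vs: "valid S (a # t)" and nr: "NR S (a # t)"
  shows "cw S (a # t) \<in> W S" "ip (cw S (a # t)) = card S - Suc (length t)"
    "key (cw S (a # t)) = Some (a, set t)" "drop (Suc (ip (cw S (a # t)))) (cw S (a # t)) = t"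
proof -
  let ?v = "cw S (a # t)"
  show v: "?v \<in> W S" using cw_W[OF S vs] .
  show ip: "ip ?v = card S - Suc (length t)" using cw_ip[OF S vs nr] by simp
  have dr: "drop (ip ?v) ?v = a # t" using cw_drop[OF S vs] ip by simp
  have "a \<in> S" using vs by (simp add: valid_def)
  then have "card S \<ge> 1" using U_fin[OF S] by (metis One_nat_def Suc_leI card_gt_0_iff empty_iff)
  moreover have "length (a # t) \<le> card S"
  proof -
    have "distinct (a # t)" using vs by (simp add: valid_def lext_def)
    then have "length (a # t) = card (set (a # t))" by (simp add: distinct_card)
    also have "\<dots> \<le> card S" using vs U_fin[OF S] by (simp add: valid_def card_mono)
    finally show ?thesis .
  qed
  ultimately have lt: "ip ?v < length ?v" using ip W_length[OF S v] by simp
  have nth: "?v ! ip ?v = a" using dr lt by (metis hd_drop_conv_nth list.sel(1))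
  show dt: "drop (Suc (ip ?v)) ?v = t" using dr by (metis drop_Suc list.sel(3) tl_drop)
  show "key ?v = Some (a, set t)" using lt nth dt by (simp add: key_def)
qed

lemma key_Some:
  assumes S: "S \<in> U" and v: "v \<in> W S" and k: "key v = Some (a, S0)"
  shows "ip v < length v" "a = v ! ip v" "S0 = set (drop (Suc (ip v)) v)"
    "drop (ip v) v = a # drop (Suc (ip v)) v" "NR S (drop (ip v) v)" "S0 \<in> U" "a \<in> S - S0"
    "insert a S0 \<in> U" "S0 \<subseteq> S"
proof -
  show lt: "ip v < length v" using k ip_le[of v] by (auto simp: key_def split: if_splits)
  show a: "a = v ! ip v" and S0: "S0 = set (drop (Suc (ip v)) v)" using k lt by (auto simp: key_def split: if_splits)
  have rN: "ip v < card S" using lt W_length[OF S v] by simp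
  note sl = suffix_letter[OF S v rN]
  show "drop (ip v) v = a # drop (Suc (ip v)) v" using sl(3) a by simp
  show "NR S (drop (ip v) v)" using NR_drop[OF S v lt] .
  show "S0 \<in> U" using valid_drop[OF S v, of "Suc (ip v)"] S0 by (simp add: valid_def)
  show "a \<in> S - S0" "insert a S0 \<in> U" using sl a S0 by auto
  show "S0 \<subseteq> S" using valid_drop[OF S v, of "Suc (ip v)"] S0 by (simp add: valid_def)
qed

lemma Gf_Am: assumes t: "t \<in> W S0" and fin: "finite S0"
  shows "Gf x t' t = Am S0 x t t'"
proof -
  have st: "set t = S0" using t by (simp add: W_def)
  have "Am S0 x t t' = (\<Sum>i\<in>S0. if Tp R i t = t' then x i else 0)"
    unfolding Am_def using fin by (rule sum.inter_filter)
  also have "\<dots> = Gf x t' t" unfolding Gf_def st by (rule sum.cong) auto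
  finally show ?thesis by simp
qed

lemma block_Some:
  assumes S: "S \<in> U" and v0: "v0 \<in> W S" and k0: "key v0 = Some (a, S0)"
  shows "det_on {v\<in>W S. key v = Some (a, S0)} (\<lambda>v w'. (if v = w' then lam else 0) - Dm S x w' v) = chi S0 x lam"
proof -
  note ks = key_Some[OF S v0 k0]
  have S0U: "S0 \<in> U" using ks(6) .
  have finS0: "finite S0" using U_fin[OF S0U] .
  have finW0: "finite (W S0)" using W_fin[OF finS0] .
  let ?B = "{v\<in>W S. key v = Some (a, S0)}"
  let ?h = "\<lambda>t. cw S (a # t)"
  let ?g = "\<lambda>v. drop (Suc (ip v)) v"
  have vt: "valid S (a # t)" and nrt: "NR S (a # t)" if t: "t \<in> W S0" for t
  proof -
    have "valid S t" using t S0U ks(9) by (auto simp: W_def valid_def)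
    then show "valid S (a # t)" using valid_cons ks(7,8) t by (simp add: W_def)
    have "set (a # t) = set (drop (ip v0) v0)" using ks(3,4) t by (simp add: W_def)
    moreover have "hd (a # t) = hd (drop (ip v0) v0)" using ks(4) by simp
    moreover have "drop (ip v0) v0 \<noteq> []" using ks(4) by simp
    ultimately show "NR S (a # t)" using ks(5) unfolding NR_def by simp
  qed
  have bij: "bij_betw ?h (W S0) ?B"
  proof (rule bij_betw_byWitness[where f' = ?g])
    show "\<forall>t\<in>W S0. ?g (?h t) = t" using key_cw(4)[OF S vt nrt] by simp
    show "\<forall>v\<in>?B. ?h (?g v) = v"
    proof
      fix v assume "v \<in> ?B"
      then have v: "v \<in> W S" and kv: "key v = Some (a, S0)" by auto
      show "?h (?g v) = v" using key_Some(4)[OF S v kv] cw_self[OF S v] by simp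
    qed
    show "?h ` W S0 \<subseteq> ?B"
    proof
      fix v assume "v \<in> ?h ` W S0"
      then obtain t where t: "t \<in> W S0" and vt': "v = ?h t" by auto
      show "v \<in> ?B" using key_cw(1,3)[OF S vt[OF t] nrt[OF t]] t vt' by (simp add: W_def)
    qed
    show "?g ` ?B \<subseteq> W S0"
    proof
      fix t assume "t \<in> ?g ` ?B"
      then obtain v where v: "v \<in> W S" and kv: "key v = Some (a, S0)" and tv: "t = ?g v" by auto
      have "lext R t" using valid_drop[OF S v, of "Suc (ip v)"] tv by (simp add: valid_def)
      moreover have "set t = S0" using key_Some(3)[OF S v kv] tv by simp
      ultimately show "t \<in> W S0" by (simp add: W_def)
    qed
  qed
  have "det_on ?B (\<lambda>v w'. (if v = w' then lam else 0) - Dm S x w' v)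
      = det_on (W S0) (\<lambda>t t'. (if ?h t = ?h t' then lam else 0) - Dm S x (?h t') (?h t))"
    by (rule det_on_reindex[OF bij finW0])
  also have "\<dots> = chi S0 x lam" unfolding chi_def
  proof (rule det_on_cong)
    fix t t' assume t: "t \<in> W S0" and t': "t' \<in> W S0"
    have "?h t = ?h t' \<longleftrightarrow> t = t'" using key_cw(4)[OF S vt[OF t] nrt[OF t]] key_cw(4)[OF S vt[OF t'] nrt[OF t']] by metis
    moreover have "Dm S x (?h t') (?h t) = Gf x t' t"
    proof -
      have "ip (?h t') \<noteq> length (?h t')" using key_cw(3)[OF S vt[OF t'] nrt[OF t']] by (auto simp: key_def split: if_splits)
      then show ?thesis unfolding Dm_def using key_cw(4)[OF S vt[OF t] nrt[OF t]] key_cw(4)[OF S vt[OF t'] nrt[OF t']] by simp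
    qed
    moreover have "Gf x t' t = Am S0 x t t'" using Gf_Am[OF t finS0] .
    ultimately show "(if ?h t = ?h t' then lam else 0) - Dm S x (?h t') (?h t) = (if t = t' then lam else 0) - Am S0 x t t'"
      by simp
  qed
  finally show ?thesis .
qed

lemma block_None:
  assumes S: "S \<in> U"
  shows "{v\<in>W S. key v = None} = {cw S []}" "cw S [] \<in> W S" "key (cw S []) = None"
    "det_on {v\<in>W S. key v = None} (\<lambda>v w'. (if v = w' then lam else 0) - Dm S x w' v) = lam - (\<Sum>i\<in>S. x i)"
proof -
  show w0: "cw S [] \<in> W S" using cw_W[OF S] U_empty by (simp add: valid_def lext_def)
  have ip0: "ip (cw S []) = length (cw S [])" using cw_ip_nil[OF S] W_length[OF S w0] by simp
  show k0: "key (cw S []) = None" using ip0 by (simp add: key_def)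
  show eq: "{v\<in>W S. key v = None} = {cw S []}"
  proof
    show "{v\<in>W S. key v = None} \<subseteq> {cw S []}"
    proof
      fix v assume "v \<in> {v\<in>W S. key v = None}"
      then have v: "v \<in> W S" and "ip v = length v" by (auto simp: key_def split: if_splits)
      then show "v \<in> {cw S []}" using cw_self[OF S v] by simp
    qed
    show "{cw S []} \<subseteq> {v\<in>W S. key v = None}" using w0 k0 by simp
  qed
  show "det_on {v\<in>W S. key v = None} (\<lambda>v w'. (if v = w' then lam else 0) - Dm S x w' v) = lam - (\<Sum>i\<in>S. x i)"
    unfolding eq using ip0 by (simp add: Dm_def)
qed


definition Aset :: "nat set \<Rightarrow> nat set \<Rightarrow> nat set" where
  "Aset S S0 = {a \<in> S - S0. insert a S0 \<in> U \<and> a \<noteq> Max (S - S0)}"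

definition Kset :: "nat set \<Rightarrow> (nat set \<times> nat) set" where
  "Kset S = Sigma {S0 \<in> U. S0 \<subseteq> S} (Aset S)"

lemma U_finite: "finite U"
proof -
  have "U \<subseteq> Pow {1..n}" using U_sub by auto
  then show ?thesis by (rule finite_subset) simp
qed

lemma key_image:
  assumes S: "S \<in> U"
  shows "key ` W S = insert None ((\<lambda>(S0, a). Some (a, S0)) ` Kset S)"
proof
  have finS: "finite S" using U_fin[OF S] .
  show "key ` W S \<subseteq> insert None ((\<lambda>(S0, a). Some (a, S0)) ` Kset S)"
  proof
    fix c assume "c \<in> key ` W S"
    then obtain v where v: "v \<in> W S" and c: "c = key v" by auto
    show "c \<in> insert None ((\<lambda>(S0, a). Some (a, S0)) ` Kset S)"
    proof (cases c)
      case None then show ?thesis by simp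
    next
      case (Some p)
      obtain a S0 where p: "p = (a, S0)" by (cases p)
      have kv: "key v = Some (a, S0)" using c Some p by simp
      note ks = key_Some[OF S v kv]
      obtain b where b: "b \<in> S - set (drop (ip v) v)" "hd (drop (ip v) v) < b" using ks(5) NR_def by auto
      have bS0: "b \<in> S - S0" and ab: "a < b" using b ks(3,4) by auto
      have "b \<le> Max (S - S0)" using bS0 finS by simp
      then have "a \<noteq> Max (S - S0)" using ab by simp
      then have "(S0, a) \<in> Kset S" using ks(6-9) by (simp add: Kset_def Aset_def)
      then show ?thesis using Some p by force
    qed
  qed
  show "insert None ((\<lambda>(S0, a). Some (a, S0)) ` Kset S) \<subseteq> key ` W S"
  proof
    fix c assume "c \<in> insert None ((\<lambda>(S0, a). Some (a, S0)) ` Kset S)"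
    then consider "c = None" | S0 a where "c = Some (a, S0)" "(S0, a) \<in> Kset S" by auto
    then show "c \<in> key ` W S"
    proof cases
      case 1 then show ?thesis using block_None[OF S] by (metis image_eqI)
    next
      case 2
      have S0U: "S0 \<in> U" and S0S: "S0 \<subseteq> S" and aA: "a \<in> S - S0" "insert a S0 \<in> U" "a \<noteq> Max (S - S0)"
        using 2(2) by (auto simp: Kset_def Aset_def)
      have finS0: "finite S0" using U_fin[OF S0U] .
      let ?t = "sorted_list_of_set S0"
      have vt: "valid S ?t" using sorted_lext[of ?t] S0U S0S finS0 by (simp add: valid_def)
      have vat: "valid S (a # ?t)" using valid_cons[OF vt] aA finS0 by simp
      have ne: "S - S0 \<noteq> {}" using aA by auto
      have mS: "Max (S - S0) \<in> S - S0" using ne finS by (intro Max_in) auto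
      have "a \<le> Max (S - S0)" using aA(1) finS by simp
      then have "a < Max (S - S0)" using aA(3) by simp
      then have nr: "NR S (a # ?t)" unfolding NR_def using mS aA(3) finS0 by auto
      have "key (cw S (a # ?t)) = Some (a, S0)" using key_cw(3)[OF S vat nr] finS0 by simp
      then show ?thesis using key_cw(1)[OF S vat nr] 2(1) by (metis image_eqI)
    qed
  qed
qed

lemma chi_rec:
  assumes S: "S \<in> U"
  shows "chi S x lam = (lam - (\<Sum>i\<in>S. x i)) * (\<Prod>S0\<in>{S0\<in>U. S0 \<subseteq> S}. chi S0 x lam ^ card (Aset S S0))"
proof -
  let ?blk = "\<lambda>c. det_on {v\<in>W S. key v = c} (\<lambda>v w'. (if v = w' then lam else 0) - Dm S x w' v)"
  let ?f = "\<lambda>(S0::nat set, a::nat). Some (a, S0)"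
  have finS: "finite S" using U_fin[OF S] .
  have finA: "finite {S0 \<in> U. S0 \<subseteq> S}" using U_finite by simp
  have finAs: "\<forall>S0\<in>{S0 \<in> U. S0 \<subseteq> S}. finite (Aset S S0)" using finS by (simp add: Aset_def)
  have finK: "finite (Kset S)" unfolding Kset_def using finA finAs by (intro finite_SigmaI) auto
  have inj: "inj_on ?f (Kset S)" by (auto simp: inj_on_def)
  have "chi S x lam = (\<Prod>c\<in>key ` W S. ?blk c)" by (rule chi_blocks[OF S])
  also have "\<dots> = ?blk None * (\<Prod>c\<in>?f ` Kset S. ?blk c)"
    unfolding key_image[OF S] using finK by (subst prod.insert) auto
  also have "(\<Prod>c\<in>?f ` Kset S. ?blk c) = (\<Prod>p\<in>Kset S. ?blk (?f p))"
    using prod.reindex[OF inj, of ?blk] by (simp add: comp_def)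
  also have "\<dots> = (\<Prod>p\<in>Kset S. chi (fst p) x lam)"
  proof (rule prod.cong[OF refl])
    fix p assume p: "p \<in> Kset S"
    obtain S0 a where pe: "p = (S0, a)" by (cases p)
    have "Some (a, S0) \<in> key ` W S" using p pe key_image[OF S] by force
    then obtain v0 where "v0 \<in> W S" "key v0 = Some (a, S0)" by force
    then show "?blk (?f p) = chi (fst p) x lam" using block_Some[OF S] pe by simp
  qed
  also have "\<dots> = (\<Prod>S0\<in>{S0 \<in> U. S0 \<subseteq> S}. \<Prod>a\<in>Aset S S0. chi S0 x lam)"
    unfolding Kset_def by (subst prod.Sigma[OF finA finAs]) (simp add: case_prod_beta)
  also have "\<dots> = (\<Prod>S0\<in>{S0 \<in> U. S0 \<subseteq> S}. chi S0 x lam ^ card (Aset S S0))" by simp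
  finally show ?thesis unfolding block_None(4)[OF S, of lam x] .
qed

end

context forest
begin

function ee :: "nat set \<Rightarrow> nat set \<Rightarrow> nat" where
  "ee S T = (if T = S then 1 else 0) + (\<Sum>S0\<in>{S0\<in>U. T \<subseteq> S0 \<and> S0 \<subset> S \<and> finite S}. card (Aset S S0) * ee S0 T)"
  by auto
termination
  by (relation "measure (\<lambda>(S, T). card S)") (auto intro: psubset_card_mono)

declare ee.simps[simp del]

lemma chi_formula:
  assumes S: "S \<in> U"
  shows "chi S x lam = (\<Prod>T\<in>{T\<in>U. T \<subseteq> S}. (lam - (\<Sum>i\<in>T. x i)) ^ ee S T)"
  using S
proof (induction "card S" arbitrary: S rule: less_induct)
  case less
  have S: "S \<in> U" using less.prems .
  have finS: "finite S" using U_fin[OF S] .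
  let ?q = "\<lambda>T. lam - (\<Sum>i\<in>T. x i)"
  let ?A = "{S0\<in>U. S0 \<subset> S}"
  let ?B = "{T\<in>U. T \<subseteq> S}"
  have finA: "finite ?A" and finB: "finite ?B" using U_finite by auto
  have IH: "chi S0 x lam = (\<Prod>T\<in>{T\<in>U. T \<subseteq> S0}. ?q T ^ ee S0 T)" if "S0 \<in> ?A" for S0
    using less.hyps[of S0] that finS psubset_card_mono by blast
  have "chi S x lam = ?q S * (\<Prod>S0\<in>?B. chi S0 x lam ^ card (Aset S S0))" by (rule chi_rec[OF S])
  also have "(\<Prod>S0\<in>?B. chi S0 x lam ^ card (Aset S S0)) = (\<Prod>S0\<in>?A. chi S0 x lam ^ card (Aset S S0))"
  proof -
    have "?B = insert S ?A" using S by auto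
    moreover have "S \<notin> ?A" by simp
    moreover have "Aset S S = {}" by (simp add: Aset_def)
    ultimately show ?thesis using finA by simp
  qed
  also have "\<dots> = (\<Prod>S0\<in>?A. \<Prod>T\<in>{T\<in>?B. T \<subseteq> S0}. ?q T ^ (card (Aset S S0) * ee S0 T))"
  proof (rule prod.cong[OF refl])
    fix S0 assume S0: "S0 \<in> ?A"
    have "{T\<in>?B. T \<subseteq> S0} = {T\<in>U. T \<subseteq> S0}" using S0 by auto
    then show "chi S0 x lam ^ card (Aset S S0) = (\<Prod>T\<in>{T\<in>?B. T \<subseteq> S0}. ?q T ^ (card (Aset S S0) * ee S0 T))"
      unfolding IH[OF S0] by (simp add: prod_power_distrib power_mult mult.commute)
  qed
  also have "\<dots> = (\<Prod>T\<in>?B. \<Prod>S0\<in>{S0\<in>?A. T \<subseteq> S0}. ?q T ^ (card (Aset S S0) * ee S0 T))"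
    by (rule prod.swap_restrict[OF finA finB])
  also have "\<dots> = (\<Prod>T\<in>?B. ?q T ^ (\<Sum>S0\<in>{S0\<in>U. T \<subseteq> S0 \<and> S0 \<subset> S \<and> finite S}. card (Aset S S0) * ee S0 T))"
  proof (rule prod.cong[OF refl])
    fix T assume "T \<in> ?B"
    have "{S0\<in>?A. T \<subseteq> S0} = {S0\<in>U. T \<subseteq> S0 \<and> S0 \<subset> S \<and> finite S}" using finS by auto
    then show "(\<Prod>S0\<in>{S0\<in>?A. T \<subseteq> S0}. ?q T ^ (card (Aset S S0) * ee S0 T))
        = ?q T ^ (\<Sum>S0\<in>{S0\<in>U. T \<subseteq> S0 \<and> S0 \<subset> S \<and> finite S}. card (Aset S S0) * ee S0 T)"
      by (simp add: power_sum)
  qed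
  also have "?q S * \<dots> = (\<Prod>T\<in>?B. ?q T ^ ee S T)"
  proof -
    have "(\<Prod>T\<in>?B. ?q T ^ ee S T) = (\<Prod>T\<in>?B. ?q T ^ (if T = S then 1 else 0)) *
        (\<Prod>T\<in>?B. ?q T ^ (\<Sum>S0\<in>{S0\<in>U. T \<subseteq> S0 \<and> S0 \<subset> S \<and> finite S}. card (Aset S S0) * ee S0 T))"
      by (subst ee.simps) (simp add: power_add prod.distrib)
    moreover have "(\<Prod>T\<in>?B. ?q T ^ (if T = S then 1 else 0)) = ?q S"
      using finB S by (simp add: if_distrib prod.If_cases cong: if_cong)
    ultimately show ?thesis by simp
  qed
  finally show ?case .
qed

end

context forest
begin

lemma insert_max_U:
  assumes S: "S \<in> U" and S0: "S0 \<in> U" and sub: "S0 \<subset> S"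
  shows "Max (S - S0) \<in> S - S0" "insert (Max (S - S0)) S0 \<in> U"
proof -
  have finS: "finite S" using U_fin[OF S] .
  have ne: "S - S0 \<noteq> {}" using sub by auto
  show mS: "Max (S - S0) \<in> S - S0" using finS ne by (intro Max_in) auto
  let ?m = "Max (S - S0)"
  show "insert ?m S0 \<in> U" unfolding upper_sets_def
  proof (intro CollectI conjI ballI allI impI)
    show "insert ?m S0 \<subseteq> {1..n}" using U_sub[OF S] U_sub[OF S0] mS by auto
    fix z y assume z: "z \<in> insert ?m S0" and zy: "R z y"
    show "y \<in> insert ?m S0"
    proof (cases "z = ?m")
      case True
      have yS: "y \<in> S" using U_closed[OF S, of ?m y] mS zy True by auto
      show ?thesis
      proof (cases "y = ?m")
        case False
        then have "?m < y" using prec_less[of ?m y] zy True by (simp add: prec_def)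
        then have "y \<notin> S - S0" using finS by (metis Max_ge finite_Diff leD)
        then show ?thesis using yS by simp
      qed simp
    next
      case False
      then have "z \<in> S0" using z by simp
      then show ?thesis using U_closed[OF S0] zy by auto
    qed
  qed
qed

definition Add :: "nat set \<Rightarrow> nat set \<Rightarrow> nat set" where
  "Add S S0 = {a \<in> S - S0. insert a S0 \<in> U}"

lemma card_Aset:
  assumes S: "S \<in> U" and S0: "S0 \<in> U" and sub: "S0 \<subset> S"
  shows "int (card (Aset S S0)) = int (card (Add S S0)) - 1" "card (Add S S0) \<ge> 1"
proof -
  have finS: "finite S" using U_fin[OF S] .
  have mA: "Max (S - S0) \<in> Add S S0" using insert_max_U[OF S S0 sub] by (simp add: Add_def)
  have finA: "finite (Add S S0)" using finS by (simp add: Add_def)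
  show c1: "card (Add S S0) \<ge> 1" using mA finA by (metis One_nat_def Suc_leI card_gt_0_iff empty_iff)
  have "Aset S S0 = Add S S0 - {Max (S - S0)}" by (auto simp: Aset_def Add_def)
  then have "card (Aset S S0) = card (Add S S0) - 1" using mA finA by (simp add: card_Diff_singleton)
  then show "int (card (Aset S S0)) = int (card (Add S S0)) - 1" using c1 by (simp add: of_nat_diff)
qed

abbreviation "mc T S \<equiv> maximal_chains U T S"

lemma lat_fin: "finite (lat_interval U T S)"
  unfolding lat_interval_def using U_finite by simp

lemma mc_fin: "finite (mc T S)"
proof -
  have "mc T S \<subseteq> Pow (lat_interval U T S)" unfolding maximal_chains_def by auto
  then show ?thesis using lat_fin by (meson finite_Pow_iff finite_subset)
qed

lemma mc_mem:
  assumes T: "T \<in> U" and S: "S \<in> U" and TS: "T \<subseteq> S" and C: "C \<in> mc T S"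
  shows "S \<in> C" "T \<in> C"
proof -
  have Ci: "C \<subseteq> lat_interval U T S" and Cc: "is_chain C"
    and Cm: "\<And>C'. C \<subseteq> C' \<Longrightarrow> C' \<subseteq> lat_interval U T S \<Longrightarrow> is_chain C' \<Longrightarrow> C' = C"
    using C unfolding maximal_chains_def by auto
  have "insert S C = C"
  proof (rule Cm)
    show "insert S C \<subseteq> lat_interval U T S" using Ci S TS by (auto simp: lat_interval_def)
    show "is_chain (insert S C)" using Cc Ci unfolding is_chain_def lat_interval_def by blast
  qed auto
  then show "S \<in> C" by blast
  have "insert T C = C"
  proof (rule Cm)
    show "insert T C \<subseteq> lat_interval U T S" using Ci T TS by (auto simp: lat_interval_def)
    show "is_chain (insert T C)" using Cc Ci unfolding is_chain_def lat_interval_def by blast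
  qed auto
  then show "T \<in> C" by blast
qed

lemma mc_refl: assumes T: "T \<in> U" shows "mc T T = {{T}}"
proof
  show "mc T T \<subseteq> {{T}}"
  proof
    fix C assume C: "C \<in> mc T T"
    then have "C \<subseteq> {T}" unfolding maximal_chains_def lat_interval_def by auto
    moreover have "T \<in> C" using mc_mem[OF T T _ C] by simp
    ultimately show "C \<in> {{T}}" by auto
  qed
  show "{{T}} \<subseteq> mc T T"
    unfolding maximal_chains_def lat_interval_def is_chain_def using T by auto
qed

definition Rem :: "nat set \<Rightarrow> nat set \<Rightarrow> nat set" where
  "Rem T S = {b \<in> S. S - {b} \<in> U \<and> T \<subseteq> S - {b}}"

lemma chain_max:
  assumes fin: "finite C" and ne: "C \<noteq> {}" and ch: "is_chain C" and finE: "\<forall>X\<in>C. finite X"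
  shows "\<exists>M\<in>C. \<forall>X\<in>C. X \<subseteq> M"
proof -
  have f2: "finite (card ` C)" using fin by simp
  have n2: "card ` C \<noteq> {}" using ne by simp
  have "Max (card ` C) \<in> card ` C" using Max_in[OF f2 n2] .
  then obtain M where M1: "M \<in> C" and M2: "card M = Max (card ` C)" by auto
  have "\<forall>X\<in>C. card X \<le> card M" using M2 f2 by simp
  note M = M1 this
  have "\<forall>X\<in>C. X \<subseteq> M"
  proof
    fix X assume X: "X \<in> C"
    show "X \<subseteq> M"
    proof (rule ccontr)
      assume "\<not> X \<subseteq> M"
      then have "M \<subset> X" using ch X M(1) unfolding is_chain_def by blast
      then have "card M < card X" using finE X by (simp add: psubset_card_mono)
      then show False using M(2) X by force
    qed
  qed
  then show ?thesis using M(1) by blast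
qed

lemma mc_rec:
  assumes T: "T \<in> U" and S: "S \<in> U" and TS: "T \<subset> S"
  shows "card (mc T S) = (\<Sum>b\<in>Rem T S. card (mc T (S - {b})))"
proof -
  have finS: "finite S" using U_fin[OF S] .
  let ?F = "\<lambda>(b::nat, C::nat set set). insert S C"
  let ?Sig = "Sigma (Rem T S) (\<lambda>b. mc T (S - {b}))"
  have notS: "S \<notin> C" if "C \<in> mc T (S - {b})" "b \<in> S" for b C
    using that unfolding maximal_chains_def lat_interval_def by auto
  have bij: "bij_betw ?F ?Sig (mc T S)"
    unfolding bij_betw_def
  proof (intro conjI)
    show "inj_on ?F ?Sig"
    proof (rule inj_onI, clarify)
      fix b C b' C'
      assume b: "b \<in> Rem T S" and C: "C \<in> mc T (S - {b})" and b': "b' \<in> Rem T S" and C': "C' \<in> mc T (S - {b'})"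
        and eq: "insert S C = insert S C'"
      have bS: "b \<in> S" "b' \<in> S" "S - {b} \<in> U" "S - {b'} \<in> U" "T \<subseteq> S - {b}" "T \<subseteq> S - {b'}"
        using b b' by (auto simp: Rem_def)
      have "C = C'" using eq notS[OF C bS(1)] notS[OF C' bS(2)] by (metis insert_ident)
      moreover have "S - {b} \<in> C" using mc_mem(1)[OF T bS(3) bS(5) C] .
      moreover have "S - {b'} \<in> C'" using mc_mem(1)[OF T bS(4) bS(6) C'] .
      moreover have "is_chain C" using C unfolding maximal_chains_def by simp
      ultimately have "S - {b} \<subseteq> S - {b'} \<or> S - {b'} \<subseteq> S - {b}" unfolding is_chain_def by simp
      moreover have "S - {b} \<subseteq> S - {b'} \<Longrightarrow> b = b'" using bS(2) by (cases "b = b'") auto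
      moreover have "S - {b'} \<subseteq> S - {b} \<Longrightarrow> b = b'" using bS(1) by (cases "b = b'") auto
      ultimately have "b = b'" by blast
      then show "b = b' \<and> C = C'" using \<open>C = C'\<close> by simp
    qed
    show "?F ` ?Sig = mc T S"
    proof
      show "?F ` ?Sig \<subseteq> mc T S"
      proof clarify
        fix b C assume b: "b \<in> Rem T S" and C: "C \<in> mc T (S - {b})"
        have bS: "b \<in> S" "S - {b} \<in> U" "T \<subseteq> S - {b}" using b by (auto simp: Rem_def)
        have Ci: "C \<subseteq> lat_interval U T (S - {b})" and Cc: "is_chain C"
          and Cm: "\<And>C'. C \<subseteq> C' \<Longrightarrow> C' \<subseteq> lat_interval U T (S - {b}) \<Longrightarrow> is_chain C' \<Longrightarrow> C' = C"
          using C unfolding maximal_chains_def by auto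
        have Sb: "S - {b} \<in> C" using mc_mem(1)[OF T bS(2) bS(3) C] .
        show "insert S C \<in> mc T S" unfolding maximal_chains_def
        proof (intro CollectI conjI allI impI)
          show "insert S C \<subseteq> lat_interval U T S" using Ci S TS by (auto simp: lat_interval_def)
          show "is_chain (insert S C)" using Cc Ci unfolding is_chain_def lat_interval_def by blast
          fix D assume D: "insert S C \<subseteq> D \<and> D \<subseteq> lat_interval U T S \<and> is_chain D"
          have D1: "insert S C \<subseteq> D" and D2: "D \<subseteq> lat_interval U T S" and D3: "is_chain D" using D by auto
          have SbD: "S - {b} \<in> D" using Sb D1 by blast
          have Dsub: "D - {S} \<subseteq> lat_interval U T (S - {b})"
          proof
            fix X assume X: "X \<in> D - {S}"
            then have XD: "X \<in> D" and XS': "X \<noteq> S" by auto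
            have XU: "X \<in> U" "T \<subseteq> X" "X \<subseteq> S" using D2 XD by (auto simp: lat_interval_def)
            have "X \<subseteq> S - {b} \<or> S - {b} \<subseteq> X" using D3 XD SbD unfolding is_chain_def by simp
            moreover have "S - {b} \<subseteq> X \<Longrightarrow> X = S - {b}"
            proof -
              assume a: "S - {b} \<subseteq> X"
              have "b \<notin> X"
              proof
                assume "b \<in> X"
                then have "S \<subseteq> X" using a by blast
                then show False using XU(3) XS' by blast
              qed
              then show "X = S - {b}" using a XU(3) by blast
            qed
            ultimately have "X \<subseteq> S - {b}" by blast
            then show "X \<in> lat_interval U T (S - {b})" using XU by (simp add: lat_interval_def)
          qed
          have "D - {S} = C"
          proof (rule Cm)
            show "C \<subseteq> D - {S}" using D1 notS[OF C bS(1)] by blast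
            show "is_chain (D - {S})" using D3 unfolding is_chain_def by blast
          qed (use Dsub in simp)
          then show "D = insert S C" using D1 by blast
        qed
      qed
      show "mc T S \<subseteq> ?F ` ?Sig"
      proof
        fix D assume D: "D \<in> mc T S"
        have Di: "D \<subseteq> lat_interval U T S" and Dc: "is_chain D"
          and Dm: "\<And>C'. D \<subseteq> C' \<Longrightarrow> C' \<subseteq> lat_interval U T S \<Longrightarrow> is_chain C' \<Longrightarrow> C' = D"
          using D unfolding maximal_chains_def by auto
        have SD: "S \<in> D" and TD: "T \<in> D" using mc_mem[OF T S _ D] TS by auto
        let ?C = "D - {S}"
        have finC: "finite ?C" using Di lat_fin finite_subset by blast
        have neC: "?C \<noteq> {}" using TD TS by auto
        have chC: "is_chain ?C" using Dc unfolding is_chain_def by blast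
        have finE: "\<forall>X\<in>?C. finite X" using Di U_fin by (auto simp: lat_interval_def)
        obtain M where M: "M \<in> ?C" "\<forall>X\<in>?C. X \<subseteq> M" using chain_max[OF finC neC chC finE] by blast
        have MU: "M \<in> U" and MS: "M \<subset> S" and TM: "T \<subseteq> M" using M Di by (auto simp: lat_interval_def)
        obtain b where b: "S - M = {b}"
        proof -
          have "\<exists>b. S - M = {b}"
          proof (rule ccontr)
            assume nb: "\<not> (\<exists>b. S - M = {b})"
            let ?m = "Max (S - M)"
            have m1: "?m \<in> S - M" and m2: "insert ?m M \<in> U" using insert_max_U[OF S MU MS] by auto
            have neq: "insert ?m M \<noteq> S" using nb m1 by auto
            have "insert (insert ?m M) D = D"
            proof (rule Dm)
              show "insert (insert ?m M) D \<subseteq> lat_interval U T S"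
                using Di m1 m2 TM MS by (auto simp: lat_interval_def)
              show "is_chain (insert (insert ?m M) D)"
              proof -
                have "\<forall>X\<in>D. X \<subseteq> insert ?m M \<or> insert ?m M \<subseteq> X"
                proof
                  fix X assume X: "X \<in> D"
                  show "X \<subseteq> insert ?m M \<or> insert ?m M \<subseteq> X"
                  proof (cases "X = S")
                    case True then show ?thesis using m1 MS by auto
                  next
                    case False then show ?thesis using M(2) X by blast
                  qed
                qed
                then show ?thesis using Dc unfolding is_chain_def by blast
              qed
            qed auto
            then have "insert ?m M \<in> ?C" using neq by blast
            then have "insert ?m M \<subseteq> M" using M(2) by blast
            then show False using m1 by blast
          qed
          then show ?thesis using that by blast
        qed
        have Mb: "M = S - {b}" using b MS by blast
        have bR: "b \<in> Rem T S" using b Mb MU TM by (auto simp: Rem_def)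
        have Cmc: "?C \<in> mc T (S - {b})" unfolding maximal_chains_def
        proof (intro CollectI conjI allI impI)
          show "?C \<subseteq> lat_interval U T (S - {b})" using Di M(2) Mb by (auto simp: lat_interval_def)
          show "is_chain ?C" by (rule chC)
          fix C' assume C': "?C \<subseteq> C' \<and> C' \<subseteq> lat_interval U T (S - {b}) \<and> is_chain C'"
          have SC': "S \<notin> C'"
          proof
            assume "S \<in> C'"
            then have "S \<subseteq> S - {b}" using C' by (auto simp: lat_interval_def)
            moreover have "b \<in> S" using b by blast
            ultimately show False by blast
          qed
          have "insert S C' = D"
          proof (rule Dm)
            show "D \<subseteq> insert S C'" using C' by blast
            show "insert S C' \<subseteq> lat_interval U T S" using C' S TS by (auto simp: lat_interval_def)
            show "is_chain (insert S C')" using C' unfolding is_chain_def lat_interval_def by blast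
          qed
          then show "C' = ?C" using SC' by blast
        qed
        have DS: "D = insert S ?C" using SD by blast
        have mem: "(b, ?C) \<in> ?Sig" using bR Cmc by simp
        have "D = ?F (b, ?C)" using DS by simp
        then show "D \<in> ?F ` ?Sig" using mem by (rule image_eqI)
      qed
    qed
  qed
  have "card (mc T S) = card ?Sig" using bij_betw_same_card[OF bij] by simp
  also have "\<dots> = (\<Sum>b\<in>Rem T S. card (mc T (S - {b})))"
    by (rule card_SigmaI) (use finS mc_fin in \<open>auto simp: Rem_def\<close>)
  finally show ?thesis .
qed


lemma F_rec:
  assumes T: "T \<in> U" and S: "S \<in> U" and TS: "T \<subset> S"
  shows "int (card (mc T S)) = 1 + (\<Sum>S0\<in>{S0\<in>U. T \<subseteq> S0 \<and> S0 \<subset> S}. int (card (Aset S S0)) * int (card (mc T S0)))"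
proof -
  let ?f = "\<lambda>X. int (card (mc T X))"
  let ?I = "{X\<in>U. T \<subseteq> X \<and> X \<subseteq> S}"
  let ?Ilo = "{S0\<in>U. T \<subseteq> S0 \<and> S0 \<subset> S}"
  let ?Ihi = "{S1\<in>U. T \<subset> S1 \<and> S1 \<subseteq> S}"
  have finI: "finite ?I" and finLo: "finite ?Ilo" and finHi: "finite ?Ihi" using U_finite by auto
  have finS: "finite S" using U_fin[OF S] .
  have hi: "sum ?f ?Ihi = sum ?f ?I - ?f T"
  proof -
    have "?Ihi = ?I - {T}" using TS by auto
    moreover have "T \<in> ?I" using T TS by auto
    ultimately show ?thesis using finI by (simp add: sum_diff1)
  qed
  have lo: "sum ?f ?Ilo = sum ?f ?I - ?f S"
  proof -
    have "?Ilo = ?I - {S}" using TS by auto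
    moreover have "S \<in> ?I" using S TS by auto
    ultimately show ?thesis using finI by (simp add: sum_diff1)
  qed
  have fT: "?f T = 1" using mc_refl[OF T] by simp
  have finAdd: "\<forall>S0\<in>?Ilo. finite (Add S S0)" using finS by (simp add: Add_def)
  have finRem: "\<forall>S1\<in>?Ihi. finite (Rem T S1)" using U_fin by (auto simp: Rem_def)
  have "(\<Sum>S0\<in>?Ilo. int (card (Add S S0)) * ?f S0) = (\<Sum>S0\<in>?Ilo. \<Sum>a\<in>Add S S0. ?f S0)" by simp
  also have "\<dots> = (\<Sum>p\<in>Sigma ?Ilo (Add S). ?f (fst p))"
    by (subst sum.Sigma[OF finLo finAdd]) (simp add: case_prod_beta)
  also have "\<dots> = (\<Sum>q\<in>Sigma ?Ihi (Rem T). ?f (fst q - {snd q}))"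
  proof -
    have bij: "bij_betw (\<lambda>p. (insert (snd p) (fst p), snd p)) (Sigma ?Ilo (Add S)) (Sigma ?Ihi (Rem T))"
    proof (rule bij_betw_byWitness[where f' = "\<lambda>q. (fst q - {snd q}, snd q)"])
      show "\<forall>p\<in>Sigma ?Ilo (Add S). (fst (insert (snd p) (fst p), snd p) - {snd (insert (snd p) (fst p), snd p)}, snd (insert (snd p) (fst p), snd p)) = p"
        by (auto simp: Add_def)
      show "\<forall>q\<in>Sigma ?Ihi (Rem T). (insert (snd (fst q - {snd q}, snd q)) (fst (fst q - {snd q}, snd q)), snd (fst q - {snd q}, snd q)) = q"
        by (auto simp: Rem_def)
      show "(\<lambda>p. (insert (snd p) (fst p), snd p)) ` Sigma ?Ilo (Add S) \<subseteq> Sigma ?Ihi (Rem T)"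
        by (auto simp: Add_def Rem_def)
      show "(\<lambda>q. (fst q - {snd q}, snd q)) ` Sigma ?Ihi (Rem T) \<subseteq> Sigma ?Ilo (Add S)"
        by (auto simp: Add_def Rem_def insert_absorb)
    qed
    have "(\<Sum>p\<in>Sigma ?Ilo (Add S). ?f (fst p)) = (\<Sum>p\<in>Sigma ?Ilo (Add S). ?f (fst (insert (snd p) (fst p), snd p) - {snd (insert (snd p) (fst p), snd p)}))"
      by (rule sum.cong[OF refl]) (auto simp: Add_def)
    also have "\<dots> = (\<Sum>q\<in>Sigma ?Ihi (Rem T). ?f (fst q - {snd q}))"
      by (rule sum.reindex_bij_betw[OF bij])
    finally show ?thesis .
  qed
  also have "\<dots> = (\<Sum>S1\<in>?Ihi. \<Sum>b\<in>Rem T S1. ?f (S1 - {b}))"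
    by (subst sum.Sigma[OF finHi finRem]) (simp add: case_prod_beta)
  also have "\<dots> = sum ?f ?Ihi"
  proof (rule sum.cong[OF refl])
    fix S1 assume "S1 \<in> ?Ihi"
    then have "S1 \<in> U" "T \<subset> S1" by auto
    then show "(\<Sum>b\<in>Rem T S1. ?f (S1 - {b})) = ?f S1" using mc_rec[OF T] by (simp add: of_nat_sum)
  qed
  finally have addf: "(\<Sum>S0\<in>?Ilo. int (card (Add S S0)) * ?f S0) = sum ?f ?Ihi" .
  have "(\<Sum>S0\<in>?Ilo. int (card (Aset S S0)) * ?f S0) = (\<Sum>S0\<in>?Ilo. int (card (Add S S0)) * ?f S0 - ?f S0)"
  proof (rule sum.cong[OF refl])
    fix S0 assume "S0 \<in> ?Ilo"
    then have e: "int (card (Add S S0)) = int (card (Aset S S0)) + 1" using card_Aset(1)[OF S] by simp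
    show "int (card (Aset S S0)) * ?f S0 = int (card (Add S S0)) * ?f S0 - ?f S0"
      unfolding e by (simp add: algebra_simps)
  qed
  also have "\<dots> = sum ?f ?Ihi - sum ?f ?Ilo" using addf by (simp add: sum_subtractf)
  also have "\<dots> = ?f S - 1" using hi lo fT by simp
  finally show ?thesis by simp
qed

lemma F_id:
  assumes T: "T \<in> U" and S: "S \<in> U" and TS: "T \<subseteq> S"
  shows "int (card (mc T S)) = (\<Sum>T'\<in>{T'\<in>U. T \<subseteq> T' \<and> T' \<subseteq> S}. int (ee S T'))"
  using S TS
proof (induction "card S" arbitrary: S rule: less_induct)
  case less
  have S: "S \<in> U" and TS: "T \<subseteq> S" using less.prems by auto
  have finS: "finite S" using U_fin[OF S] .
  show ?case
  proof (cases "T = S")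
    case True
    have "{T'\<in>U. T \<subseteq> T' \<and> T' \<subseteq> S} = {S}" using True S by auto
    moreover have "ee S S = 1" by (subst ee.simps) (auto intro!: sum.neutral)
    ultimately show ?thesis using mc_refl[OF T] True by simp
  next
    case False
    then have TS': "T \<subset> S" using TS by auto
    let ?I = "{T'\<in>U. T \<subseteq> T' \<and> T' \<subseteq> S}"
    let ?B = "{S0\<in>U. S0 \<subset> S}"
    let ?Ilo = "{S0\<in>U. T \<subseteq> S0 \<and> S0 \<subset> S}"
    let ?g = "\<lambda>S0 T'. int (card (Aset S S0)) * int (ee S0 T')"
    have finI: "finite ?I" and finB: "finite ?B" and finLo: "finite ?Ilo" using U_finite by auto
    have "(\<Sum>T'\<in>?I. int (ee S T')) = (\<Sum>T'\<in>?I. (if T' = S then 1 else 0) + (\<Sum>S0\<in>{S0\<in>?B. T' \<subseteq> S0}. ?g S0 T'))"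
    proof (rule sum.cong[OF refl])
      fix T' assume "T' \<in> ?I"
      have "{S0\<in>U. T' \<subseteq> S0 \<and> S0 \<subset> S \<and> finite S} = {S0\<in>?B. T' \<subseteq> S0}" using finS by auto
      then show "int (ee S T') = (if T' = S then 1 else 0) + (\<Sum>S0\<in>{S0\<in>?B. T' \<subseteq> S0}. ?g S0 T')"
        by (subst ee.simps) (simp add: of_nat_sum)
    qed
    also have "\<dots> = 1 + (\<Sum>T'\<in>?I. \<Sum>S0\<in>{S0\<in>?B. T' \<subseteq> S0}. ?g S0 T')"
      using finI S TS by (simp add: sum.distrib)
    also have "(\<Sum>T'\<in>?I. \<Sum>S0\<in>{S0\<in>?B. T' \<subseteq> S0}. ?g S0 T') = (\<Sum>S0\<in>?B. \<Sum>T'\<in>{T'\<in>?I. T' \<subseteq> S0}. ?g S0 T')"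
      by (rule sum.swap_restrict[OF finI finB])
    also have "\<dots> = (\<Sum>S0\<in>?Ilo. \<Sum>T'\<in>{T'\<in>?I. T' \<subseteq> S0}. ?g S0 T')"
    proof (rule sum.mono_neutral_right[OF finB])
      show "?Ilo \<subseteq> ?B" by auto
      show "\<forall>S0\<in>?B - ?Ilo. (\<Sum>T'\<in>{T'\<in>?I. T' \<subseteq> S0}. ?g S0 T') = 0"
      proof
        fix S0 assume "S0 \<in> ?B - ?Ilo"
        then have "\<not> T \<subseteq> S0" by auto
        then have E: "{T'\<in>?I. T' \<subseteq> S0} = {}" by blast
        show "(\<Sum>T'\<in>{T'\<in>?I. T' \<subseteq> S0}. ?g S0 T') = 0" unfolding E by simp
      qed
    qed
    also have "\<dots> = (\<Sum>S0\<in>?Ilo. int (card (Aset S S0)) * int (card (mc T S0)))"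
    proof (rule sum.cong[OF refl])
      fix S0 assume S0: "S0 \<in> ?Ilo"
      have "{T'\<in>?I. T' \<subseteq> S0} = {T'\<in>U. T \<subseteq> T' \<and> T' \<subseteq> S0}" using S0 by auto
      moreover have "int (card (mc T S0)) = (\<Sum>T'\<in>{T'\<in>U. T \<subseteq> T' \<and> T' \<subseteq> S0}. int (ee S0 T'))"
        using less.hyps[of S0] S0 finS psubset_card_mono by auto
      ultimately show "(\<Sum>T'\<in>{T'\<in>?I. T' \<subseteq> S0}. ?g S0 T') = int (card (Aset S S0)) * int (card (mc T S0))"
        by (simp add: sum_distrib_left)
    qed
    finally show ?thesis using F_rec[OF T S TS'] by simp
  qed
qed

lemma mob_sum:
  assumes T: "T \<in> U" and T2: "T2 \<in> U" and TT: "T \<subseteq> T2"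
  shows "(\<Sum>T'\<in>{T'\<in>U. T \<subseteq> T' \<and> T' \<subseteq> T2}. mobius U T T') = (if T = T2 then 1 else 0)"
proof (cases "T = T2")
  case True
  then have "{T'\<in>U. T \<subseteq> T' \<and> T' \<subseteq> T2} = {T}" using T by auto
  then show ?thesis using True by simp
next
  case False
  then have TT': "T \<subset> T2" using TT by auto
  have fin2: "finite T2" using U_fin[OF T2] .
  let ?J = "{U'\<in>U. T \<subseteq> U' \<and> U' \<subset> T2}"
  have finJ: "finite ?J" using U_finite by simp
  have m: "mobius U T T2 = - (\<Sum>U'\<in>?J. mobius U T U')"
    using TT' fin2 False by (subst mobius.simps) simp
  have "{T'\<in>U. T \<subseteq> T' \<and> T' \<subseteq> T2} = insert T2 ?J" using T2 TT by auto
  then show ?thesis using m finJ False by simp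
qed

lemma derangement_ee:
  assumes T: "T \<in> U"
  shows "derangement_number n R T = int (ee {1..n} T)"
proof -
  let ?P = "{1..n}"
  have P: "?P \<in> U" using U_top .
  have subP: "\<And>X. X \<in> U \<Longrightarrow> X \<subseteq> ?P" using U_sub by blast
  let ?A = "{T'\<in>U. T \<subseteq> T'}"
  have finA: "finite ?A" using U_finite by simp
  have "derangement_number n R T = (\<Sum>T'\<in>?A. mobius U T T' * int (card (mc T' ?P)))"
    unfolding derangement_number_def Let_def by simp
  also have "\<dots> = (\<Sum>T'\<in>?A. \<Sum>T2\<in>{T2\<in>?A. T' \<subseteq> T2}. mobius U T T' * int (ee ?P T2))"
  proof (rule sum.cong[OF refl])
    fix T' assume T': "T' \<in> ?A"
    have "{T2\<in>U. T' \<subseteq> T2 \<and> T2 \<subseteq> ?P} = {T2\<in>?A. T' \<subseteq> T2}" using T' subP by auto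
    then show "mobius U T T' * int (card (mc T' ?P)) = (\<Sum>T2\<in>{T2\<in>?A. T' \<subseteq> T2}. mobius U T T' * int (ee ?P T2))"
      using F_id[of T' ?P] T' P subP by (simp add: sum_distrib_left)
  qed
  also have "\<dots> = (\<Sum>T2\<in>?A. \<Sum>T'\<in>{T'\<in>?A. T' \<subseteq> T2}. mobius U T T' * int (ee ?P T2))"
    by (rule sum.swap_restrict[OF finA finA])
  also have "\<dots> = (\<Sum>T2\<in>?A. (if T = T2 then 1 else 0) * int (ee ?P T2))"
  proof (rule sum.cong[OF refl])
    fix T2 assume T2: "T2 \<in> ?A"
    have "{T'\<in>?A. T' \<subseteq> T2} = {T'\<in>U. T \<subseteq> T' \<and> T' \<subseteq> T2}" by auto
    then show "(\<Sum>T'\<in>{T'\<in>?A. T' \<subseteq> T2}. mobius U T T' * int (ee ?P T2)) = (if T = T2 then 1 else 0) * int (ee ?P T2)"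
      using mob_sum[OF T] T2 by (simp add: sum_distrib_right[symmetric])
  qed
  also have "\<dots> = (\<Sum>T2\<in>?A. (if T = T2 then int (ee ?P T2) else 0))"
    by (rule sum.cong[OF refl]) simp
  also have "\<dots> = int (ee ?P T)" using finA T by (simp add: sum.delta)
  finally show ?thesis .
qed

end

definition wd :: "nat \<Rightarrow> (nat \<Rightarrow> nat) \<Rightarrow> nat list" where
  "wd n \<pi> = map \<pi> [1..<Suc n]"

lemma wd_nth: "k \<in> {1..n} \<Longrightarrow> wd n \<pi> ! (k - 1) = \<pi> k"
proof -
  assume k: "k \<in> {1..n}"
  then have "k - 1 < length [1..<Suc n]" by auto
  then have "map \<pi> [1..<Suc n] ! (k - 1) = \<pi> ([1..<Suc n] ! (k - 1))" by (rule nth_map)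
  also have "[1..<Suc n] ! (k - 1) = k" using k by (subst nth_upt) auto
  finally show ?thesis unfolding wd_def .
qed

lemma wd_length[simp]: "length (wd n \<pi>) = n"
  unfolding wd_def by simp

lemma fold_tau_outside:
  "(\<forall>i\<in>set l. 1 \<le> i \<and> Suc i \<le> n) \<Longrightarrow> k \<notin> {1..n} \<Longrightarrow> fold (tau R) l \<pi> k = \<pi> k"
proof (induction l arbitrary: \<pi>)
  case (Cons i l)
  have "fold (tau R) (i # l) \<pi> k = fold (tau R) l (tau R i \<pi>) k" by simp
  also have "\<dots> = tau R i \<pi> k" using Cons by simp
  also have "\<dots> = \<pi> k" using Cons.prems
    by (auto simp: tau_def Transposition.transpose_def)
  finally show ?case .
qed simp

lemma fold_tau_word:
  assumes "1 \<le> j" "j \<le> n"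
  shows "map (fold (tau R) [j..<n] \<pi>) [1..<Suc n] = map \<pi> [1..<j] @ bub R (map \<pi> [j..<Suc n])"
  using assms
proof (induction "n - j" arbitrary: j \<pi>)
  case 0
  then have jn: "j = n" by simp
  have "[1..<Suc n] = [1..<n] @ [n]" using 0 by simp
  then show ?case using jn by simp
next
  case (Suc m)
  then have jn: "j < n" by simp
  let ?M = "map \<pi> [Suc (Suc j)..<Suc n]"
  have up1: "[j..<n] = j # [Suc j..<n]" using jn by (simp add: upt_conv_Cons)
  have up2: "[j..<Suc n] = j # Suc j # [Suc (Suc j)..<Suc n]" using jn by (simp add: upt_conv_Cons)
  have up3: "[Suc j..<Suc n] = Suc j # [Suc (Suc j)..<Suc n]" using jn by (simp add: upt_conv_Cons)
  have up4: "[1..<Suc j] = [1..<j] @ [j]" using Suc.prems by simp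
  let ?p = "tau R j \<pi>"
  have IH: "map (fold (tau R) [Suc j..<n] ?p) [1..<Suc n] = map ?p [1..<Suc j] @ bub R (map ?p [Suc j..<Suc n])"
    using Suc.hyps(1)[of "Suc j" ?p] Suc.hyps(2) jn by simp
  have lhs: "fold (tau R) [j..<n] \<pi> = fold (tau R) [Suc j..<n] ?p" using up1 by simp
  show ?case
  proof (cases "\<not> R (\<pi> j) (\<pi> (Suc j)) \<and> \<not> R (\<pi> (Suc j)) (\<pi> j)")
    case True
    have p: "?p = \<pi> \<circ> Transposition.transpose j (Suc j)" using True by (simp add: tau_def)
    have a: "map ?p [1..<j] = map \<pi> [1..<j]" unfolding p by (rule map_cong) (auto simp: Transposition.transpose_def)
    have b: "map ?p [Suc (Suc j)..<Suc n] = ?M" unfolding p by (rule map_cong) (auto simp: Transposition.transpose_def)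
    have "map ?p [1..<Suc j] = map \<pi> [1..<j] @ [\<pi> (Suc j)]" using a up4 p by simp
    moreover have "map ?p [Suc j..<Suc n] = \<pi> j # ?M" using b up3 p by simp
    moreover have "bub R (map \<pi> [j..<Suc n]) = \<pi> (Suc j) # bub R (\<pi> j # ?M)" using up2 True by simp
    ultimately show ?thesis using IH lhs by simp
  next
    case False
    have p: "?p = \<pi>" using False by (auto simp: tau_def)
    have "bub R (map \<pi> [j..<Suc n]) = \<pi> j # bub R (\<pi> (Suc j) # ?M)" using up2 False by auto
    then show ?thesis using IH lhs p up3 up4 by simp
  qed
qed

context forest
begin

lemma partial_word:
  assumes "1 \<le> j" "j \<le> n" and that: "inj_on \<pi> {1..n}"
  shows "wd n (partial n R j \<pi>) = Tp R (\<pi> j) (wd n \<pi>)"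
proof -
  have split: "wd n \<pi> = map \<pi> [1..<j] @ \<pi> j # map \<pi> [Suc j..<Suc n]"
  proof -
    have e1: "[1..<Suc n] = [1..<j] @ [j..<Suc n]" using assms upt_add_eq_append[of 1 j "Suc n - j"] by simp
    have e2: "[j..<Suc n] = j # [Suc j..<Suc n]" using assms by (simp add: upt_conv_Cons)
    have "[1..<Suc n] = [1..<j] @ j # [Suc j..<Suc n]" using e1 e2 by simp
    then show ?thesis unfolding wd_def by simp
  qed
  have ni: "\<pi> j \<notin> set (map \<pi> [1..<j])"
  proof
    assume "\<pi> j \<in> set (map \<pi> [1..<j])"
    then obtain k where k: "k \<in> {1..<j}" "\<pi> k = \<pi> j" by auto
    have "k \<in> {1..n}" "j \<in> {1..n}" using k assms by auto
    then have "k = j" using inj_onD[OF that k(2)] by blast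
    then show False using k by simp
  qed
  have "Tp R (\<pi> j) (wd n \<pi>) = map \<pi> [1..<j] @ bub R (\<pi> j # map \<pi> [Suc j..<Suc n])"
    unfolding split by (rule Tp_split[OF ni])
  also have "\<pi> j # map \<pi> [Suc j..<Suc n] = map \<pi> [j..<Suc n]"
  proof -
    have "[j..<Suc n] = j # [Suc j..<Suc n]" using assms by (simp add: upt_conv_Cons)
    then show ?thesis by simp
  qed
  finally show ?thesis unfolding wd_def partial_def using fold_tau_word[OF assms(1,2)] by simp
qed

lemma partial_outside: "1 \<le> j \<Longrightarrow> k \<notin> {1..n} \<Longrightarrow> partial n R j \<pi> k = \<pi> k"
  unfolding partial_def by (rule fold_tau_outside) auto

definition fw :: "nat list \<Rightarrow> nat \<Rightarrow> nat" where
  "fw w = (\<lambda>k. if k \<in> {1..n} then w ! (k - 1) else k)"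

lemma wd_inj: "\<forall>k. k \<notin> {1..n} \<longrightarrow> \<pi> k = k \<Longrightarrow> \<forall>k. k \<notin> {1..n} \<longrightarrow> \<pi>' k = k \<Longrightarrow> wd n \<pi> = wd n \<pi>' \<Longrightarrow> \<pi> = \<pi>'"
proof
  fix k assume o1: "\<forall>k. k \<notin> {1..n} \<longrightarrow> \<pi> k = k" and o2: "\<forall>k. k \<notin> {1..n} \<longrightarrow> \<pi>' k = k"
    and eq: "wd n \<pi> = wd n \<pi>'"
  show "\<pi> k = \<pi>' k"
  proof (cases "k \<in> {1..n}")
    case True
    then have "wd n \<pi> ! (k - 1) = \<pi> k" "wd n \<pi>' ! (k - 1) = \<pi>' k" using wd_nth by blast+
    then show ?thesis using eq by simp
  next
    case False then show ?thesis using o1 o2 by simp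
  qed
qed

lemma wd_bij: "bij_betw (wd n) (lin_ext n R) (W {1..n})"
proof (rule bij_betw_byWitness[where f' = fw])
  show "\<forall>\<pi>\<in>lin_ext n R. fw (wd n \<pi>) = \<pi>"
  proof
    fix \<pi> assume "\<pi> \<in> lin_ext n R"
    then have p: "\<pi> permutes {1..n}" by (simp add: lin_ext_def)
    show "fw (wd n \<pi>) = \<pi>"
    proof
      fix k show "fw (wd n \<pi>) k = \<pi> k"
        using permutes_not_in[OF p, of k] wd_nth[of k n \<pi>] by (auto simp: fw_def)
    qed
  qed
  show "\<forall>w\<in>W {1..n}. wd n (fw w) = w"
  proof
    fix w assume w: "w \<in> W {1..n}"
    have len: "length w = n" using W_length[OF U_top w] by simp
    show "wd n (fw w) = w"
    proof (rule nth_equalityI)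
      show "length (wd n (fw w)) = length w" using len by simp
      fix i assume "i < length (wd n (fw w))"
      then have i: "Suc i \<in> {1..n}" by simp
      show "wd n (fw w) ! i = w ! i" using wd_nth[OF i, of "fw w"] i by (simp add: fw_def)
    qed
  qed
  show "wd n ` lin_ext n R \<subseteq> W {1..n}"
  proof
    fix w assume "w \<in> wd n ` lin_ext n R"
    then obtain \<pi> where pl: "\<pi> \<in> lin_ext n R" and w: "w = wd n \<pi>" by auto
    have p: "\<pi> permutes {1..n}" and ord: "\<forall>i j. prec R i j \<longrightarrow> Hilbert_Choice.inv \<pi> i < Hilbert_Choice.inv \<pi> j"
      using pl by (auto simp: lin_ext_def)
    have inj: "inj_on \<pi> {1..n}" using permutes_inj[OF p] by (simp add: inj_on_def inj_def)
    have su: "set [1..<Suc n] = {1..n}" by auto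
    have dis: "distinct w" unfolding w wd_def distinct_map using inj su by simp
    have st: "set w = {1..n}" unfolding w wd_def set_map su using permutes_image[OF p] by simp
    have "sorted_wrt (\<lambda>a b. \<not> prec R b a) w"
      unfolding sorted_wrt_iff_nth_less
    proof (intro allI impI notI)
      fix p q assume pq: "p < q" "q < length w" and pr: "prec R (w ! q) (w ! p)"
      have wl: "length w = n" unfolding w wd_def by simp
      have "w ! q = \<pi> (Suc q)" "w ! p = \<pi> (Suc p)" using pq wl wd_nth[of "Suc q" n \<pi>] wd_nth[of "Suc p" n \<pi>] unfolding w by auto
      then have "Hilbert_Choice.inv \<pi> (\<pi> (Suc q)) < Hilbert_Choice.inv \<pi> (\<pi> (Suc p))" using ord pr by simp
      then show False using pq permutes_inverses(2)[OF p] by simp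
    qed
    then show "w \<in> W {1..n}" using dis st by (simp add: W_def lext_def)
  qed
  show "fw ` W {1..n} \<subseteq> lin_ext n R"
  proof
    fix \<pi> assume "\<pi> \<in> fw ` W {1..n}"
    then obtain w where w: "w \<in> W {1..n}" and pw: "\<pi> = fw w" by auto
    have len: "length w = n" using W_length[OF U_top w] by simp
    have dis: "distinct w" and st: "set w = {1..n}" and srt: "sorted_wrt (\<lambda>a b. \<not> prec R b a) w"
      using w by (auto simp: W_def lext_def)
    have inj: "inj_on \<pi> {1..n}"
    proof (rule inj_onI)
      fix a b assume "a \<in> {1..n}" "b \<in> {1..n}" "\<pi> a = \<pi> b"
      then have "w ! (a - 1) = w ! (b - 1)" using pw by (simp add: fw_def)
      moreover have "a - 1 < length w" "b - 1 < length w" using len \<open>a \<in> {1..n}\<close> \<open>b \<in> {1..n}\<close> by auto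
      ultimately have "a - 1 = b - 1" using nth_eq_iff_index_eq[OF dis] by blast
      then show "a = b" using \<open>a \<in> {1..n}\<close> \<open>b \<in> {1..n}\<close> by (simp; linarith)
    qed
    have img: "\<pi> ` {1..n} = {1..n}"
    proof -
      have "\<pi> ` {1..n} = (\<lambda>k. w ! (k - 1)) ` {1..n}" using pw by (auto simp: fw_def)
      also have "\<dots> = set w"
      proof
        show "(\<lambda>k. w ! (k - 1)) ` {1..n} \<subseteq> set w" using len by auto
        show "set w \<subseteq> (\<lambda>k. w ! (k - 1)) ` {1..n}"
        proof
          fix a assume "a \<in> set w"
          then obtain p where "p < length w" "w ! p = a" by (auto simp: in_set_conv_nth)
          then show "a \<in> (\<lambda>k. w ! (k - 1)) ` {1..n}" using len by (intro image_eqI[where x = "Suc p"]) auto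
        qed
      qed
      finally show ?thesis using st by simp
    qed
    have p: "\<pi> permutes {1..n}"
      unfolding permutes_altdef using inj img pw by (auto simp: bij_betw_def fw_def)
    have "\<forall>i j. prec R i j \<longrightarrow> Hilbert_Choice.inv \<pi> i < Hilbert_Choice.inv \<pi> j"
    proof (intro allI impI)
      fix i j assume pr: "prec R i j"
      have ij: "i \<in> {1..n}" "j \<in> {1..n}" using R_dom pr by (auto simp: prec_def)
      let ?a = "Hilbert_Choice.inv \<pi> i" and ?b = "Hilbert_Choice.inv \<pi> j"
      have pin: "\<And>z. (Hilbert_Choice.inv \<pi> z \<in> {1..n}) = (z \<in> {1..n})" by (rule permutes_in_image[OF permutes_inv[OF p]])
      have ab: "?a \<in> {1..n}" "?b \<in> {1..n}" using ij pin by blast+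
      have pa: "\<pi> ?a = i" "\<pi> ?b = j" using permutes_inverses(1)[OF p] by auto
      have "fw w ?a = i" "fw w ?b = j" using pa pw by simp_all
      then have wa: "w ! (?a - 1) = i" and wb: "w ! (?b - 1) = j" using ab unfolding fw_def by simp_all
      have "?a \<noteq> ?b" using pr wa wb by (auto simp: prec_def)
      moreover have "\<not> ?b < ?a"
      proof
        assume "?b < ?a"
        then have "?b - 1 < ?a - 1" "?a - 1 < length w" using ab len by auto
        then have "\<not> prec R (w ! (?a - 1)) (w ! (?b - 1))" using srt by (simp add: sorted_wrt_iff_nth_less)
        then show False using wa wb pr by simp
      qed
      ultimately show "?a < ?b" by simp
    qed
    then show "\<pi> \<in> lin_ext n R" using p by (simp add: lin_ext_def)
  qed
qed


lemma lin_ext_fin: "finite (lin_ext n R)"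
proof -
  have "lin_ext n R \<subseteq> {p. p permutes {1..n}}" by (auto simp: lin_ext_def)
  moreover have "finite {p. p permutes {1..n}}" by (rule finite_permutations) simp
  ultimately show ?thesis by (rule finite_subset)
qed

lemma tmb_sum:
  fixes x :: "nat \<Rightarrow> 'a::comm_ring_1"
  assumes pl: "\<pi> \<in> lin_ext n R"
  shows "trans_mat_bar n R x \<pi>' \<pi> = (\<Sum>j\<in>{j\<in>{1..n}. partial n R j \<pi> = \<pi>'}. x (\<pi> j))"
proof (cases "\<pi>' = \<pi>")
  case False then show ?thesis by (simp add: trans_mat_bar_def trans_mat_def)
next
  case True
  have p: "\<pi> permutes {1..n}" using pl by (simp add: lin_ext_def)
  have "(\<Sum>i\<in>{1..n}. x i) = (\<Sum>j\<in>{1..n}. x (\<pi> j))"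
    using sum.reindex_bij_betw[OF permutes_imp_bij[OF p], of x] by simp
  also have "\<dots> = (\<Sum>j\<in>{j\<in>{1..n}. partial n R j \<pi> = \<pi>}. x (\<pi> j)) + (\<Sum>j\<in>{j\<in>{1..n}. partial n R j \<pi> \<noteq> \<pi>}. x (\<pi> j))"
    by (subst sum.union_disjoint[symmetric]) (auto intro: sum.cong)
  finally show ?thesis using True by (simp add: trans_mat_bar_def trans_mat_def)
qed

lemma tmb_eq:
  fixes x :: "nat \<Rightarrow> 'a::comm_ring_1"
  assumes pl: "\<pi> \<in> lin_ext n R" and pl': "\<pi>' \<in> lin_ext n R"
  shows "trans_mat_bar n R x \<pi>' \<pi> = Am {1..n} x (wd n \<pi>) (wd n \<pi>')"
proof -
  have p: "\<pi> permutes {1..n}" and p': "\<pi>' permutes {1..n}" using pl pl' by (auto simp: lin_ext_def)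
  have inj: "inj_on \<pi> {1..n}" using permutes_inj[OF p] by (simp add: inj_on_def inj_def)
  let ?J = "{j\<in>{1..n}. partial n R j \<pi> = \<pi>'}"
  let ?I = "{i\<in>{1..n}. Tp R i (wd n \<pi>) = wd n \<pi>'}"
  have img: "\<pi> ` ?J = ?I"
  proof
    show "\<pi> ` ?J \<subseteq> ?I"
    proof
      fix i assume "i \<in> \<pi> ` ?J"
      then obtain j where j: "j \<in> {1..n}" "partial n R j \<pi> = \<pi>'" and ij: "i = \<pi> j" by auto
      have "wd n (partial n R j \<pi>) = Tp R (\<pi> j) (wd n \<pi>)" by (rule partial_word[OF _ _ inj]) (use j(1) in auto)
      moreover have "\<pi> j \<in> {1..n}" using iffD2[OF permutes_in_image[OF p] j(1)] .
      ultimately show "i \<in> ?I" using j ij by simp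
    qed
    show "?I \<subseteq> \<pi> ` ?J"
    proof
      fix i assume i: "i \<in> ?I"
      let ?j = "Hilbert_Choice.inv \<pi> i"
      have pin: "\<And>z. (Hilbert_Choice.inv \<pi> z \<in> {1..n}) = (z \<in> {1..n})" by (rule permutes_in_image[OF permutes_inv[OF p]])
      have jn: "?j \<in> {1..n}" using i pin by blast
      have pj: "\<pi> ?j = i" using permutes_inverses(1)[OF p] by simp
      have "wd n (partial n R ?j \<pi>) = Tp R (\<pi> ?j) (wd n \<pi>)" by (rule partial_word[OF _ _ inj]) (use jn in auto)
      then have wq: "wd n (partial n R ?j \<pi>) = wd n \<pi>'" using i pj by simp
      have o1: "\<forall>k. k \<notin> {1..n} \<longrightarrow> partial n R ?j \<pi> k = k"
        using partial_outside[of ?j] jn permutes_not_in[OF p] by auto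
      have o2: "\<forall>k. k \<notin> {1..n} \<longrightarrow> \<pi>' k = k" using permutes_not_in[OF p'] by auto
      have "partial n R ?j \<pi> = \<pi>'" using wd_inj[OF o1 o2 wq] .
      then have "?j \<in> ?J" using jn by simp
      then show "i \<in> \<pi> ` ?J" using pj by (metis image_eqI)
    qed
  qed
  have injJ: "inj_on \<pi> ?J" using inj by (rule inj_on_subset) auto
  have "trans_mat_bar n R x \<pi>' \<pi> = (\<Sum>j\<in>?J. x (\<pi> j))" by (rule tmb_sum[OF pl])
  also have "\<dots> = (\<Sum>i\<in>\<pi> ` ?J. x i)" using sum.reindex[OF injJ, of x] by simp
  also have "\<dots> = Am {1..n} x (wd n \<pi>) (wd n \<pi>')" unfolding img Am_def by simp
  finally show ?thesis .
qed

theorem main_thm: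
  fixes x :: "nat \<Rightarrow> 'a::comm_ring_1" and lam :: 'a
  shows "(\<forall>S\<in>upper_sets n R. derangement_number n R S \<ge> 0) \<and>
         det_on (lin_ext n R)
           (\<lambda>\<pi>' \<pi>. (if \<pi>' = \<pi> then lam else 0) - trans_mat_bar n R x \<pi>' \<pi>)
         = (\<Prod>S\<in>upper_sets n R. (lam - (\<Sum>i\<in>S. x i)) ^ nat (derangement_number n R S))"
proof
  show "\<forall>S\<in>upper_sets n R. derangement_number n R S \<ge> 0" using derangement_ee by simp
  let ?P = "{1..n}"
  have bij: "bij_betw (wd n) (lin_ext n R) (W ?P)" by (rule wd_bij)
  have injw: "inj_on (wd n) (lin_ext n R)" using bij by (simp add: bij_betw_def)
  have "det_on (lin_ext n R) (\<lambda>\<pi>' \<pi>. (if \<pi>' = \<pi> then lam else 0) - trans_mat_bar n R x \<pi>' \<pi>)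
      = det_on (lin_ext n R) (\<lambda>\<pi>' \<pi>. (if wd n \<pi>' = wd n \<pi> then lam else 0) - Am ?P x (wd n \<pi>) (wd n \<pi>'))"
  proof (rule det_on_cong)
    fix \<pi>' \<pi> assume a: "\<pi>' \<in> lin_ext n R" "\<pi> \<in> lin_ext n R"
    have "(\<pi>' = \<pi>) = (wd n \<pi>' = wd n \<pi>)" using injw a by (auto dest: inj_onD)
    then show "(if \<pi>' = \<pi> then lam else 0) - trans_mat_bar n R x \<pi>' \<pi> = (if wd n \<pi>' = wd n \<pi> then lam else 0) - Am ?P x (wd n \<pi>) (wd n \<pi>')"
      using tmb_eq[OF a(2) a(1), of x] by simp
  qed
  also have "\<dots> = det_on (W ?P) (\<lambda>w' w. (if w' = w then lam else 0) - Am ?P x w w')"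
    by (rule det_on_reindex[OF bij lin_ext_fin, symmetric])
  also have "\<dots> = det_on (W ?P) (\<lambda>w w'. (if w = w' then lam else 0) - Am ?P x w w')"
  proof -
    have finW: "finite (W ?P)" using W_fin U_fin[OF U_top] by blast
    have e: "(\<lambda>w' w. (if w' = w then lam else 0) - Am ?P x w w') = (\<lambda>a b. (\<lambda>w w'. (if w = w' then lam else 0) - Am ?P x w w') b a)"
      by (auto simp: fun_eq_iff)
    show ?thesis unfolding e by (rule det_on_transpose[OF finW])
  qed
  also have "\<dots> = chi ?P x lam" by (simp add: chi_def)
  also have "\<dots> = (\<Prod>T\<in>{T\<in>U. T \<subseteq> ?P}. (lam - (\<Sum>i\<in>T. x i)) ^ ee ?P T)" by (rule chi_formula[OF U_top])
  also have "\<dots> = (\<Prod>S\<in>upper_sets n R. (lam - (\<Sum>i\<in>S. x i)) ^ nat (derangement_number n R S))"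
  proof -
    have "{T\<in>U. T \<subseteq> ?P} = U" using U_sub by auto
    moreover have "\<And>S. S \<in> U \<Longrightarrow> ee ?P S = nat (derangement_number n R S)" using derangement_ee by simp
    ultimately show ?thesis by simp
  qed
  finally show "det_on (lin_ext n R) (\<lambda>\<pi>' \<pi>. (if \<pi>' = \<pi> then lam else 0) - trans_mat_bar n R x \<pi>' \<pi>)
         = (\<Prod>S\<in>upper_sets n R. (lam - (\<Sum>i\<in>S. x i)) ^ nat (derangement_number n R S))" .
qed

end

theorem theorem5p2:
  fixes n :: nat and le :: "nat \<Rightarrow> nat \<Rightarrow> bool"
    and x :: "nat \<Rightarrow> 'a::comm_ring_1" and lam :: 'a
  assumes "rooted_forest n le" and "natural_labeling le"
  shows "(\<forall>S\<in>upper_sets n le. derangement_number n le S \<ge> 0) \<and>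
         det_on (lin_ext n le)
           (\<lambda>\<pi>' \<pi>. (if \<pi>' = \<pi> then lam else 0) - trans_mat_bar n le x \<pi>' \<pi>)
         = (\<Prod>S\<in>upper_sets n le. (lam - (\<Sum>i\<in>S. x i)) ^ nat (derangement_number n le S))"
  proof -
  interpret forest n le by (rule forest.intro) (use assms in auto)
  show ?thesis by (rule main_thm)
qed

end
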